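(* Let $V\in C^3(\mathbb{R}^3)$ satisfy (U), let $\bar u<1$, $c_2>0$, $\varepsilon_2>0$, and let $(r^\varepsilon(t),u^\varepsilon(t))$, $t\in\mathbb{R}$, $\varepsilon\in(0,\varepsilon_2]$, be solutions of the effective equation (with parameter $\varepsilon$) such that $|u^\varepsilon(t)|\le\bar u$ and $|\dot u^\varepsilon(t)|+|\ddot u^\varepsilon(t)|\le c_2$ for all $t\in\mathbb{R}$, $\varepsilon\in(0,\varepsilon_2]$. Let $\mathcal I_\varepsilon$ be the center manifolds constructed after modifying $a,m,b$ to be constant outside $\{|u|\le(1+\bar u)/2\}$. Then for all sufficiently small $\varepsilon$, the solution $(r^\varepsilon,u^\varepsilon,\dot u^\varepsilon)$ lies on $\mathcal I_\varepsilon$.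
   Context: (U): $\inf V>-\infty$, $\sup(|V|+|\nabla V|+|\nabla^2V|+|\nabla^3V|)<\infty$. $\rho\in C_0^\infty$ radial, $\mathsf e=\int\rho\neq0$, $\hat\rho(k)=(2\pi)^{-3/2}\int\rho e^{-ik\cdot x}$. For $|u|<1$: $\gamma=(1-|u|^2)^{-1/2}$, $m_0(u)w=\gamma w+\gamma^3(u\cdot w)u$, $m_e=\frac13\int|\hat\rho|^2|k|^{-2}dk$, $\varphi(s)=\frac{1}{2s^2(1-s^2)}-\frac{1}{4s^3}\log\frac{1+s}{1-s}$, $m_f(u)w=3m_e(\varphi(|u|)w+|u|^{-1}\varphi'(|u|)(u\cdot w)u)$, $m=m_0+m_f$, $a(u)w=\frac{\mathsf e^2}{12\pi}[\gamma^4w+4\gamma^6(u\cdot w)u]$, $b(u,w)=\frac{\mathsf e^2}{4\pi}[2\gamma^6(u\cdot w)w+\gamma^6|w|^2u+6\gamma^8(u\cdot w)^2u]$. Effective equation: $\dot r=u$, $m(u)\dot u=-\nabla V(r)+\varepsilon a(u)\ddot u+\varepsilon b(u,\dot u)$; with $x=(r,u)$, $y=\dot u$: $\dot x=(u,y)$, $\varepsilon\dot y=a(u)^{-1}[m(u)y+\nabla V(r)-\varepsilon b(u,y)]$. For $\varepsilon=0$, $\mathcal I_0=\{y=-m(u)^{-1}\nabla V(r)\}$ is invariant and normally repulsive. After modification of $a,m,b$ for $|u|$ near $1$ as stated, geometric singular perturbation theory yields for small $\varepsilon>0$ a $C^1$ uniformly bounded function $h_\varepsilon$ with $|h_\varepsilon+m^{-1}\nabla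 V|\le c\varepsilon$ whose graph $\mathcal I_\varepsilon=\{(r,u,h_\varepsilon(r,u))\}$ is the invariant center manifold of the modified system. *)

theory Defs
  imports "HOL-Analysis.Analysis"
begin

fun iter_partial :: "3 list \<Rightarrow> (real^3 \<Rightarrow> real) \<Rightarrow> real^3 \<Rightarrow> real" where
  "iter_partial [] f = f"
| "iter_partial (i # is) f = (\<lambda>x. frechet_derivative (iter_partial is f) (at x) (axis i 1))"

definition smooth_fun :: "(real^3 \<Rightarrow> real) \<Rightarrow> bool" where
  "smooth_fun f \<longleftrightarrow> (\<forall>is. iter_partial is f differentiable_on UNIV)"

definition radial :: "(real^3 \<Rightarrow> real) \<Rightarrow> bool" where
  "radial f \<longleftrightarrow> (\<forall>x y. norm x = norm y \<longrightarrow> f x = f y)"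

definition compact_support :: "(real^3 \<Rightarrow> real) \<Rightarrow> bool" where
  "compact_support f \<longleftrightarrow> bounded {x. f x \<noteq> 0}"

definition charge :: "(real^3 \<Rightarrow> real) \<Rightarrow> real" where
  "charge rho = integral UNIV rho"

definition rhohat :: "(real^3 \<Rightarrow> real) \<Rightarrow> real^3 \<Rightarrow> complex" where
  "rhohat rho k = complex_of_real ((2 * pi) powr (-3/2)) *
      integral UNIV (\<lambda>x. complex_of_real (rho x) * cis (- (k \<bullet> x)))"

definition m_e :: "(real^3 \<Rightarrow> real) \<Rightarrow> real" where
  "m_e rho = (1/3) * integral UNIV (\<lambda>k. (cmod (rhohat rho k))^2 / (norm k)^2)"

definition gam :: "real^3 \<Rightarrow> real" where
  "gam u = 1 / sqrt (1 - (norm u)^2)"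

definition idm :: "real^3^3" where
  "idm = (\<chi> i j. if i = j then 1 else 0)"

definition outer :: "real^3 \<Rightarrow> real^3 \<Rightarrow> real^3^3" where
  "outer u v = (\<chi> i j. u $ i * v $ j)"

text \<open>phi, extended continuously by its limit 1/3 at s = 0.\<close>
definition phi :: "real \<Rightarrow> real" where
  "phi s = (if s = 0 then 1/3
            else 1 / (2 * s^2 * (1 - s^2)) - 1 / (4 * s^3) * ln ((1 + s) / (1 - s)))"

definition m0 :: "real^3 \<Rightarrow> real^3^3" where
  "m0 u = gam u *\<^sub>R idm + (gam u)^3 *\<^sub>R outer u u"

text \<open>At u = 0 the second term vanishes since (u.w)u = 0.\<close>
definition mf :: "(real^3 \<Rightarrow> real) \<Rightarrow> real^3 \<Rightarrow> real^3^3" where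
  "mf rho u = (3 * m_e rho) *\<^sub>R
      (phi (norm u) *\<^sub>R idm + (deriv phi (norm u) / norm u) *\<^sub>R outer u u)"

definition mmat :: "(real^3 \<Rightarrow> real) \<Rightarrow> real^3 \<Rightarrow> real^3^3" where
  "mmat rho u = m0 u + mf rho u"

definition amat :: "(real^3 \<Rightarrow> real) \<Rightarrow> real^3 \<Rightarrow> real^3^3" where
  "amat rho u = ((charge rho)^2 / (12 * pi)) *\<^sub>R
      ((gam u)^4 *\<^sub>R idm + (4 * (gam u)^6) *\<^sub>R outer u u)"

definition bvec :: "(real^3 \<Rightarrow> real) \<Rightarrow> real^3 \<Rightarrow> real^3 \<Rightarrow> real^3" where
  "bvec rho u w = ((charge rho)^2 / (4 * pi)) *\<^sub>R
      ((2 * (gam u)^6 * (u \<bullet> w)) *\<^sub>R w + ((gam u)^6 * (norm w)^2) *\<^sub>R u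
       + (6 * (gam u)^8 * (u \<bullet> w)^2) *\<^sub>R u)"

definition invariant_graph ::
  "real \<Rightarrow> (real^3 \<Rightarrow> real^3^3) \<Rightarrow> (real^3 \<Rightarrow> real^3^3) \<Rightarrow> (real^3 \<Rightarrow> real^3 \<Rightarrow> real^3)
   \<Rightarrow> (real^3 \<Rightarrow> real^3) \<Rightarrow> (((real^3) \<times> (real^3)) \<Rightarrow> real^3) \<Rightarrow> bool" where
  "invariant_graph eps A M B G h \<longleftrightarrow>
    (\<forall>T R U Y t0.
       is_interval T \<and> t0 \<in> T \<and>
       (\<forall>t\<in>T. (R has_vector_derivative U t) (at t within T) \<and>
               (U has_vector_derivative Y t) (at t within T) \<and>
               (Y has_vector_derivative
                  (1 / eps) *\<^sub>R (matrix_inv (A (U t)) *v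
                     (M (U t) *v Y t + G (R t) - eps *\<^sub>R B (U t) (Y t)))) (at t within T)) \<and>
       Y t0 = h (R t0, U t0)
     \<longrightarrow> (\<forall>t\<in>T. Y t = h (R t, U t)))"

end

theory Submission
  imports Defs
begin

definition PS :: "(nat \<Rightarrow> real) \<Rightarrow> real \<Rightarrow> real" where
  "PS c x = (\<Sum>n. c n * x ^ n)"

definition R1 :: "(nat \<Rightarrow> real) \<Rightarrow> bool" where
  "R1 c \<longleftrightarrow> (\<forall>x::real. norm x < 1 \<longrightarrow> summable (\<lambda>n. c n * x ^ n))"

lemma R1_diffs: "R1 c \<Longrightarrow> R1 (diffs c)"
  unfolding R1_def using termdiff_converges[of _ 1 c] by blast

lemma PS_deriv: "R1 c \<Longrightarrow> norm x < 1 \<Longrightarrow> (PS c has_real_derivative PS (diffs c) x) (at x)"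
  unfolding PS_def R1_def using termdiffs_strong'[of 1 c x] by blast

lemma PS_nonneg: "R1 c \<Longrightarrow> (\<And>n. c n \<ge> 0) \<Longrightarrow> 0 \<le> x \<Longrightarrow> x < 1 \<Longrightarrow> PS c x \<ge> 0"
  unfolding PS_def R1_def by (intro suminf_nonneg) auto

lemma diffs_nonneg: "(\<And>n. c n \<ge> (0::real)) \<Longrightarrow> diffs c n \<ge> 0"
  by (simp add: diffs_def)

definition cphi :: "nat \<Rightarrow> real" where
  "cphi k = (real k + 1) / (2 * real k + 3)"

lemma cphi_nonneg: "cphi k \<ge> 0" by (simp add: cphi_def)

lemma R1_cphi: "R1 cphi"
  unfolding R1_def
proof (intro allI impI)
  fix x :: real assume x: "norm x < 1"
  show "summable (\<lambda>n. cphi n * x ^ n)"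
  proof (rule summable_comparison_test)
    show "\<exists>N. \<forall>n\<ge>N. norm (cphi n * x ^ n) \<le> \<bar>x\<bar> ^ n"
    proof (intro exI allI impI)
      fix n :: nat
      have "cphi n \<le> 1" by (simp add: cphi_def)
      then show "norm (cphi n * x ^ n) \<le> \<bar>x\<bar> ^ n"
        by (simp add: abs_mult power_abs cphi_nonneg abs_of_nonneg mult_left_le_one_le)
    qed
    show "summable (\<lambda>n. \<bar>x\<bar> ^ n)" using x by (intro summable_geometric) simp
  qed
qed

lemma aux_alg: fixes s p q :: real assumes "s \<noteq> 0" "2*q+1 \<noteq> 0"
  shows "p/(2* s^2) - 2* s*p/(2*q+1)/(4* s^3) = p*q/((2*q+1)* s^2)"
proof -
  have a: "2* s*p/(2*q+1)/(4* s^3) = p/(2*q+1)/(2* s^2)" using assms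
    by (simp add: power2_eq_square power3_eq_cube)
  have "p/(2* s^2) - p/(2*q+1)/(2* s^2) = (p - p/(2*q+1))/(2* s^2)" by (simp add: diff_divide_distrib)
  also have "p - p/(2*q+1) = p*(2*q)/(2*q+1)" using assms by (simp add: field_simps)
  finally show ?thesis using a assms by (simp add: power2_eq_square)
qed

lemma aux_alg2: fixes s p q :: real assumes "s \<noteq> 0" "q \<ge> 0"
  shows "s^2*p*(q+1)/((2*(q+1)+1)* s^2) = (q+1)/(2*q+3)*p"
proof -
  have "s^2*p*(q+1)/((2*(q+1)+1)* s^2) = (p*(q+1)* s^2)/((2*q+3)* s^2)" by (simp add: algebra_simps)
  also have "\<dots> = p*(q+1)/(2*q+3)" using assms by (intro nonzero_mult_divide_mult_cancel_right) simp
  finally show ?thesis by simp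
qed

lemma phi_series:
  fixes s :: real assumes s: "0 < s" "s < 1"
  shows "phi s = PS cphi (s^2)"
proof -
  have geo: "(\<lambda>k. (s^2)^k) sums (1 / (1 - s^2))"
    using geometric_sums[of "s^2"] s by (simp add: abs_less_iff power_less_one_iff)
  have lp: "(\<lambda>n. - ((-s)^n) / real n) sums ln (1 + s)" using ln_series'[of s] s by simp
  have lm: "(\<lambda>n. - ((s)^n) / real n) sums ln (1 - s)" using ln_series'[of "-s"] s by simp
  have ld: "(\<lambda>n. (s^n - (-s)^n) / real n) sums (ln (1+s) - ln (1-s))"
    using sums_diff[OF lp lm] by (simp add: diff_divide_distrib)
  have "(\<lambda>k. (\<lambda>n. (s^n - (-s)^n) / real n) (2*k+1)) sums (ln (1+s) - ln (1-s))"
  proof (subst sums_mono_reindex)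
    show "strict_mono (\<lambda>k::nat. 2*k+1)" by (auto simp: strict_mono_def)
    show "\<And>n. n \<notin> range (\<lambda>k::nat. 2 * k + 1) \<Longrightarrow> (s ^ n - (- s) ^ n) / real n = 0"
    proof -
      fix n :: nat assume "n \<notin> range (\<lambda>k::nat. 2 * k + 1)"
      then have "even n" by (metis oddE rangeI)
      then show "(s ^ n - (- s) ^ n) / real n = 0" by simp
    qed
  qed (rule ld)
  moreover have "(\<lambda>k. (\<lambda>n. (s^n - (-s)^n) / real n) (2*k+1)) = (\<lambda>k. 2 * s * (s^2)^k / (2*real k+1))"
  proof
    fix k :: nat
    have e1: "(-s)^(2*k+1) = - (s*(s^2)^k)" by (simp add: power_mult)
    have e2: "s^(2*k+1) = s*(s^2)^k" by (simp add: power_mult)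
    show "(\<lambda>n. (s^n - (-s)^n) / real n) (2*k+1) = 2 * s * (s^2)^k / (2*real k+1)"
      by (simp only: e1 e2) (simp add: algebra_simps)
  qed
  ultimately have L: "(\<lambda>k. 2 * s * (s^2)^k / (2*real k+1)) sums (ln (1+s) - ln (1-s))"
    by simp
  have A: "(\<lambda>k. (s^2)^k / (2* s^2)) sums (1 / (1 - s^2) / (2* s^2))"
    using sums_divide[OF geo, of "2* s^2"] .
  have B: "(\<lambda>k. 2 * s * (s^2)^k / (2*real k+1) / (4* s^3)) sums ((ln (1+s) - ln (1-s)) / (4* s^3))"
    using sums_divide[OF L, of "4* s^3"] .
  have C: "(\<lambda>k. (s^2)^k / (2* s^2) - 2 * s * (s^2)^k / (2*real k+1) / (4* s^3)) sums
      (1 / (1 - s^2) / (2* s^2) - (ln (1+s) - ln (1-s)) / (4* s^3))"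
    using sums_diff[OF A B] .
  have ph: "phi s = 1 / (1 - s^2) / (2* s^2) - (ln (1+s) - ln (1-s)) / (4* s^3)"
    using s by (simp add: phi_def ln_div)
  have "(\<lambda>k. (s^2)^k / (2* s^2) - 2 * s * (s^2)^k / (2*real k+1) / (4* s^3)) =
        (\<lambda>k. (s^2)^k * real k / ((2*real k+1) * s^2))"
  proof
    fix k :: nat
    have k: "2*real k+1 > 0" by simp
    show "(s^2)^k / (2* s^2) - 2 * s * (s^2)^k / (2*real k+1) / (4* s^3) = (s^2)^k * real k / ((2*real k+1) * s^2)"
      using s k by (intro aux_alg) auto
  qed
  with C ph have D: "(\<lambda>k. (s^2)^k * real k / ((2*real k+1) * s^2)) sums phi s" by simp
  have "(\<lambda>k. (s^2)^(Suc k) * real (Suc k) / ((2*real (Suc k)+1) * s^2)) sums phi s"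
    using D by (subst sums_Suc_iff) simp
  moreover have "(\<lambda>k. (s^2)^(Suc k) * real (Suc k) / ((2*real (Suc k)+1) * s^2)) = (\<lambda>k. cphi k * (s^2)^k)"
  proof
    fix k :: nat
    have e: "(s^2)^(Suc k) = s^2 * (s^2)^k" by simp
    have n: "s^2 \<noteq> 0" "2*real k + 3 \<noteq> 0" using s by auto
    show "(s^2)^(Suc k) * real (Suc k) / ((2*real (Suc k)+1) * s^2) = cphi k * (s^2)^k"
      unfolding e cphi_def using aux_alg2[where s=s and p="(s^2)^k" and q="real k"] s by (simp add: add.commute)
  qed
  ultimately show ?thesis unfolding PS_def by (simp add: sums_iff)
qed

lemma deriv_phi:
  fixes s :: real assumes s: "0 < s" "s < 1"
  shows "deriv phi s = 2 * s * PS (diffs cphi) (s^2)"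
proof -
  have s2: "norm (s^2) < 1" using s by (simp add: power_less_one_iff abs_less_iff)
  have d: "((\<lambda>x. PS cphi (x^2)) has_real_derivative PS (diffs cphi) (s^2) * (2 * s)) (at s)"
  proof -
    have "((\<lambda>x. x^2) has_real_derivative (2* s)) (at s)" by (auto intro!: derivative_eq_intros)
    from DERIV_chain2[where f="PS cphi" and g="\<lambda>x. x^2", OF PS_deriv[OF R1_cphi s2] this]
    show ?thesis .
  qed
  have "(phi has_real_derivative PS (diffs cphi) (s^2) * (2 * s)) (at s)"
    by (rule has_field_derivative_transform_within_open[OF d, of "{0<..<1}"]) (use s phi_series in auto)
  then show ?thesis by (simp add: DERIV_imp_deriv)
qed

lemma mv_add: "((A::real^3^3) + B) *v x = A *v x + B *v x"
  by (simp add: vec_eq_iff matrix_vector_mult_def sum.distrib algebra_simps)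

lemma mv_diff: "((A::real^3^3) - B) *v x = A *v x - B *v x"
  by (simp add: vec_eq_iff matrix_vector_mult_def sum_subtractf algebra_simps)

lemma mv_scaleR: "((c::real) *\<^sub>R (A::real^3^3)) *v x = c *\<^sub>R (A *v x)"
  by (simp add: vec_eq_iff matrix_vector_mult_def sum_distrib_left algebra_simps)

lemma idm_eq: "idm = mat 1"
  by (simp add: idm_def mat_def)

lemma idm_mv: "idm *v (x::real^3) = x"
  by (simp add: idm_eq)

lemma outer_mv: "outer a b *v (v::real^3) = (b \<bullet> v) *\<^sub>R a"
  by (simp add: vec_eq_iff matrix_vector_mult_def outer_def inner_vec_def sum_distrib_left algebra_simps)

lemma matrix_inv_eqI:
  fixes A N :: "real^3^3"
  assumes "A ** N = mat 1" "N ** A = mat 1"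
  shows "matrix_inv A = N"
proof -
  let ?P = "\<lambda>A'. A ** A' = mat 1 \<and> A' ** A = mat 1"
  have "?P (matrix_inv A)" unfolding matrix_inv_def by (rule someI[of ?P N]) (use assms in auto)
  then have "matrix_inv A = matrix_inv A ** (A ** N)" using assms by simp
  also have "\<dots> = (matrix_inv A ** A) ** N" by (simp add: matrix_mul_assoc)
  also have "\<dots> = N" using \<open>?P (matrix_inv A)\<close> by simp
  finally show ?thesis .
qed

lemma mat_eq_mv: fixes A B :: "real^3^3" shows "(\<And>x. A *v x = B *v x) \<Longrightarrow> A = B"
  using matrix_eq by blast

lemma norm_sq_inner: "(norm (u::real^3))^2 = u \<bullet> u"
  by (simp add: power2_norm_eq_inner)

lemma gam_sq: "norm u < 1 \<Longrightarrow> (gam u)^2 = 1 / (1 - u \<bullet> u)"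
proof -
  assume "norm u < 1"
  then have "(norm u)^2 < 1" by (simp add: power_less_one_iff abs_less_iff)
  then show ?thesis by (simp add: gam_def power_divide norm_sq_inner)
qed

lemma gam_pos: "norm u < 1 \<Longrightarrow> gam u > 0"
proof -
  assume "norm u < 1"
  then have "(norm u)^2 < 1" by (simp add: power_less_one_iff abs_less_iff)
  then show ?thesis by (simp add: gam_def)
qed

lemma gam_ge1: "norm u < 1 \<Longrightarrow> gam u \<ge> 1"
proof -
  assume "norm u < 1"
  then have a: "(norm u)^2 < 1" by (simp add: power_less_one_iff abs_less_iff)
  then have "sqrt (1 - (norm u)^2) \<le> 1" by simp
  moreover have "sqrt (1 - (norm u)^2) > 0" using a by simp
  ultimately show ?thesis by (simp add: gam_def)
qed

definition kA :: "(real^3 \<Rightarrow> real) \<Rightarrow> real" where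
  "kA rho = (charge rho)^2 / (12 * pi)"

lemma kA_pos: "charge rho \<noteq> 0 \<Longrightarrow> kA rho > 0"
  by (simp add: kA_def)

lemma amat_mv: "amat rho u *v v = kA rho *\<^sub>R ((gam u)^4 *\<^sub>R v + (4 * (gam u)^6 * (u \<bullet> v)) *\<^sub>R u)"
  by (simp add: amat_def kA_def mv_add mv_scaleR idm_mv outer_mv)

definition Ainv :: "(real^3 \<Rightarrow> real) \<Rightarrow> real^3 \<Rightarrow> real^3 \<Rightarrow> real^3" where
  "Ainv rho u w = ((1 - u \<bullet> u)^2 / kA rho) *\<^sub>R (w - (4 / (1 + 3 * (u \<bullet> u)) * (u \<bullet> w)) *\<^sub>R u)"

definition Nmat :: "(real^3 \<Rightarrow> real) \<Rightarrow> real^3 \<Rightarrow> real^3^3" where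
  "Nmat rho u = ((1 - u \<bullet> u)^2 / kA rho) *\<^sub>R (idm - (4 / (1 + 3 * (u \<bullet> u))) *\<^sub>R outer u u)"

lemma Nmat_mv: "Nmat rho u *v w = Ainv rho u w"
  by (simp add: Nmat_def Ainv_def mv_diff mv_scaleR idm_mv outer_mv)

lemma A_Ainv_scalar:
  fixes s k a :: real assumes "0 \<le> s" "s < 1" "k > 0"
  shows "k * (1/(1-s)^2) * ((1-s)^2/k) = 1"
    and "k * (1/(1-s)^2) * ((1-s)^2/k) * (- (4/(1+3* s) * a)) + k * (4 * (1/(1-s)^3) * (((1-s)^2/k) * (a - 4/(1+3* s) * a * s))) = 0"
proof -
  have ne: "1 - s \<noteq> 0" "1 + 3 * s \<noteq> 0" "k \<noteq> 0" using assms by auto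
  show 1: "k * (1/(1-s)^2) * ((1-s)^2/k) = 1" using ne by simp
  have b: "a - 4/(1+3* s) * a * s = a * (1 - s) / (1 + 3* s)" using ne by (simp add: field_simps)
  have c: "k * (4 * (1/(1-s)^3) * (((1-s)^2/k) * b)) = 4 * b / (1-s)" for b
  proof -
    have "(1-s)^3 = (1-s)^2 * (1-s)" by (simp add: power3_eq_cube power2_eq_square)
    then show ?thesis using ne by simp
  qed
  have d: "4 * (a * (1 - s) / (1 + 3* s)) / (1-s) = 4/(1+3* s) * a" using ne by simp
  show "k * (1/(1-s)^2) * ((1-s)^2/k) * (- (4/(1+3* s) * a)) + k * (4 * (1/(1-s)^3) * (((1-s)^2/k) * (a - 4/(1+3* s) * a * s))) = 0"
    unfolding 1 c b d by simp
qed

lemma gam_pow46: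
  assumes "norm u < 1"
  shows "(gam u)^4 = 1/(1 - u \<bullet> u)^2" "(gam u)^6 = 1/(1 - u \<bullet> u)^3"
proof -
  have "(gam u)^4 = ((gam u)^2)^2" by simp
  then show "(gam u)^4 = 1/(1 - u \<bullet> u)^2" using gam_sq[OF assms] by (simp add: power_divide)
  have "(gam u)^6 = ((gam u)^2)^3" by simp
  then show "(gam u)^6 = 1/(1 - u \<bullet> u)^3" using gam_sq[OF assms] by (simp add: power_divide)
qed

lemma A_Ainv:
  assumes "norm u < 1" "charge rho \<noteq> 0"
  shows "amat rho u *v Ainv rho u w = w"
proof -
  have k: "kA rho > 0" using assms kA_pos by blast
  define s where "s = u \<bullet> u"
  define a where "a = u \<bullet> w"
  define c where "c = (1 - s)^2 / kA rho"
  define d where "d = 4 / (1 + 3 * s)"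
  have s0: "s \<ge> 0" by (simp add: s_def)
  have s1: "s < 1" using assms(1) unfolding s_def by (simp flip: norm_sq_inner add: power_less_one_iff abs_less_iff)
  have Av: "Ainv rho u w = c *\<^sub>R (w - (d * a) *\<^sub>R u)" by (simp add: Ainv_def c_def d_def a_def s_def)
  have uAv: "u \<bullet> Ainv rho u w = c * (a - d * a * s)" unfolding Av
    by (simp add: inner_diff_right a_def s_def algebra_simps)
  have "amat rho u *v Ainv rho u w = kA rho *\<^sub>R ((1/(1-s)^2) *\<^sub>R (c *\<^sub>R (w - (d * a) *\<^sub>R u)) + (4 * (1/(1-s)^3) * (c * (a - d * a * s))) *\<^sub>R u)"
    unfolding amat_mv gam_pow46[OF assms(1)] uAv s_def[symmetric] Av[symmetric] ..
  also have "\<dots> = (kA rho * (1/(1-s)^2) * c) *\<^sub>R w + (kA rho * (1/(1-s)^2) * c * (- (d * a)) + kA rho * (4 * (1/(1-s)^3) * (c * (a - d * a * s)))) *\<^sub>R u"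
    by (simp add: scaleR_add_right scaleR_diff_right scaleR_add_left algebra_simps)
  also have "\<dots> = w"
    unfolding c_def d_def using A_Ainv_scalar(1)[OF s0 s1 k] A_Ainv_scalar(2)[OF s0 s1 k, of a] by simp
  finally show ?thesis .
qed

lemma matrix_inv_amat:
  assumes "norm u < 1" "charge rho \<noteq> 0"
  shows "matrix_inv (amat rho u) *v w = Ainv rho u w"
proof -
  have r: "amat rho u ** Nmat rho u = mat 1"
    by (rule mat_eq_mv) (simp add: Nmat_mv A_Ainv[OF assms] flip: matrix_vector_mul_assoc)
  then have "Nmat rho u ** amat rho u = mat 1" using matrix_left_right_inverse by blast
  with r have "matrix_inv (amat rho u) = Nmat rho u" by (rule matrix_inv_eqI)
  then show ?thesis by (simp add: Nmat_mv)
qed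

definition BL :: "'a::metric_space set \<Rightarrow> ('a \<Rightarrow> 'b::real_normed_vector) \<Rightarrow> bool" where
  "BL S f \<longleftrightarrow> (\<exists>L. L-lipschitz_on S f) \<and> bounded (f ` S)"

lemma BL_bound: "BL S f \<Longrightarrow> \<exists>B. \<forall>x\<in>S. norm (f x) \<le> B"
  unfolding BL_def bounded_iff by auto

lemma BL_lip: "BL S f \<Longrightarrow> \<exists>L. L-lipschitz_on S f"
  unfolding BL_def by auto

lemma BLI: "L-lipschitz_on S f \<Longrightarrow> (\<And>x. x \<in> S \<Longrightarrow> norm (f x) \<le> B) \<Longrightarrow> BL S f"
  unfolding BL_def bounded_iff by auto

lemma BL_const[intro]: "BL S (\<lambda>x. c)"
  unfolding BL_def by (auto intro: lipschitz_on_constant bounded_subset[of "{c}"])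

lemma BL_id: "bounded S \<Longrightarrow> BL S (\<lambda>x. x)"
  unfolding BL_def by (auto intro: lipschitz_on_id)

lemma BL_subset: "BL T f \<Longrightarrow> S \<subseteq> T \<Longrightarrow> BL S f"
  unfolding BL_def by (auto intro: lipschitz_on_subset bounded_subset)

lemma BL_compose:
  assumes "BL S f" "f ` S \<subseteq> T" "BL T g"
  shows "BL S (\<lambda>x. g (f x))"
proof -
  obtain L1 where 1: "L1-lipschitz_on S f" using assms(1) BL_lip by blast
  obtain L2 where 2: "L2-lipschitz_on T g" using assms(3) BL_lip by blast
  have "(L2*L1)-lipschitz_on S (\<lambda>x. g (f x))"
    by (rule lipschitz_on_compose2[OF 1 lipschitz_on_subset[OF 2 assms(2)]])
  moreover have "bounded ((\<lambda>x. g (f x)) ` S)"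
    using assms(2,3) unfolding BL_def by (auto intro: bounded_subset)
  ultimately show ?thesis unfolding BL_def by blast
qed

lemma BL_add:
  assumes "BL S f" "BL S g" shows "BL S (\<lambda>x. f x + g x)"
proof -
  obtain L1 where 1: "L1-lipschitz_on S f" using assms(1) BL_lip by blast
  obtain L2 where 2: "L2-lipschitz_on S g" using assms(2) BL_lip by blast
  obtain B1 where b1: "\<forall>x\<in>S. norm (f x) \<le> B1" using assms(1) BL_bound by blast
  obtain B2 where b2: "\<forall>x\<in>S. norm (g x) \<le> B2" using assms(2) BL_bound by blast
  show ?thesis
    by (rule BLI[OF lipschitz_on_add[OF 1 2], of "B1+B2"]) (use b1 b2 in \<open>auto intro: norm_triangle_le add_mono\<close>)
qed

lemma BL_minus: assumes "BL S f" shows "BL S (\<lambda>x. - f x)"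
proof -
  obtain L1 where 1: "L1-lipschitz_on S f" using assms(1) BL_lip by blast
  obtain B1 where b1: "\<forall>x\<in>S. norm (f x) \<le> B1" using assms(1) BL_bound by blast
  show ?thesis by (rule BLI[OF lipschitz_on_minus[OF 1], of B1]) (use b1 in auto)
qed

lemma BL_diff: "BL S f \<Longrightarrow> BL S g \<Longrightarrow> BL S (\<lambda>x. f x - g x)"
  using BL_add[of S f "\<lambda>x. - g x"] BL_minus[of S g] by simp

lemma BL_bilinear:
  assumes bb: "bounded_bilinear pr" and f: "BL S f" and g: "BL S g"
  shows "BL S (\<lambda>x. pr (f x) (g x))"
proof -
  interpret bounded_bilinear pr by (rule bb)
  obtain K where K: "\<And>a b. norm (pr a b) \<le> norm a * norm b * K" "K \<ge> 0"
    using pos_bounded by (metis less_le)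
  obtain L1 where 1: "L1-lipschitz_on S f" using f BL_lip by blast
  obtain L2 where 2: "L2-lipschitz_on S g" using g BL_lip by blast
  obtain B1 where b1: "\<forall>x\<in>S. norm (f x) \<le> B1" using f BL_bound by blast
  obtain B2 where b2: "\<forall>x\<in>S. norm (g x) \<le> B2" using g BL_bound by blast
  have L10: "L1 \<ge> 0" using 1 lipschitz_on_nonneg by blast
  have L20: "L2 \<ge> 0" using 2 lipschitz_on_nonneg by blast
  have lip: "(K * (L1 * max B2 0 + max B1 0 * L2))-lipschitz_on S (\<lambda>x. pr (f x) (g x))"
  proof (rule lipschitz_onI)
    show "0 \<le> K * (L1 * max B2 0 + max B1 0 * L2)" using K L10 L20 by simp
    fix x y assume xy: "x \<in> S" "y \<in> S"
    have "pr (f x) (g x) - pr (f y) (g y) = pr (f x - f y) (g x) + pr (f y) (g x - g y)"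
      by (simp add: diff_left diff_right)
    then have "norm (pr (f x) (g x) - pr (f y) (g y)) \<le> norm (pr (f x - f y) (g x)) + norm (pr (f y) (g x - g y))"
      by (metis norm_triangle_ineq)
    also have "\<dots> \<le> norm (f x - f y) * norm (g x) * K + norm (f y) * norm (g x - g y) * K"
      using K by (intro add_mono) auto
    also have "\<dots> \<le> (L1 * dist x y) * max B2 0 * K + max B1 0 * (L2 * dist x y) * K"
    proof (intro add_mono mult_right_mono mult_mono)
      show "norm (f x - f y) \<le> L1 * dist x y" using lipschitz_onD[OF 1 xy] by (simp add: dist_norm)
      show "norm (g x - g y) \<le> L2 * dist x y" using lipschitz_onD[OF 2 xy] by (simp add: dist_norm)
      show "norm (g x) \<le> max B2 0" using b2 xy by force
      show "norm (f y) \<le> max B1 0" using b1 xy by force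
    qed (use K L10 L20 in auto)
    finally show "dist (pr (f x) (g x)) (pr (f y) (g y)) \<le> K * (L1 * max B2 0 + max B1 0 * L2) * dist x y"
      by (simp add: dist_norm algebra_simps)
  qed
  show ?thesis
  proof (rule BLI[OF lip])
    fix x assume x: "x \<in> S"
    have "norm (pr (f x) (g x)) \<le> norm (f x) * norm (g x) * K" using K by auto
    also have "\<dots> \<le> max B1 0 * max B2 0 * K"
      using b1 b2 x K by (intro mult_right_mono mult_mono) force+
    finally show "norm (pr (f x) (g x)) \<le> max B1 0 * max B2 0 * K" .
  qed
qed

lemma BL_scaleR: "BL S f \<Longrightarrow> BL S g \<Longrightarrow> BL S (\<lambda>x. f x *\<^sub>R g x)"
  by (rule BL_bilinear[OF bounded_bilinear_scaleR])

lemma BL_mult: "BL S f \<Longrightarrow> BL S g \<Longrightarrow> BL S (\<lambda>x. f x * (g x :: real))"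
  by (rule BL_bilinear[OF bounded_bilinear_mult])

lemma BL_inner: "BL S f \<Longrightarrow> BL S g \<Longrightarrow> BL S (\<lambda>x. inner (f x) (g x :: 'b::real_inner))"
  by (rule BL_bilinear[OF bounded_bilinear_inner])

lemma BL_fst: assumes "BL S f" shows "BL S (\<lambda>x. fst (f x))"
proof -
  obtain L1 where 1: "L1-lipschitz_on S f" using assms BL_lip by blast
  obtain B1 where b1: "\<forall>x\<in>S. norm (f x) \<le> B1" using assms BL_bound by blast
  have "L1-lipschitz_on S (\<lambda>x. fst (f x))"
  proof (rule lipschitz_onI)
    fix x y assume xy: "x \<in> S" "y \<in> S"
    have "dist (fst (f x)) (fst (f y)) \<le> dist (f x) (f y)" by (rule dist_fst_le)
    also have "\<dots> \<le> L1 * dist x y" using lipschitz_onD[OF 1 xy] .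
    finally show "dist (fst (f x)) (fst (f y)) \<le> L1 * dist x y" .
  qed (use 1 lipschitz_on_nonneg in auto)
  then show ?thesis
  proof (rule BLI[of _ _ _ B1])
    fix x assume x: "x \<in> S"
    have "norm (fst (f x)) \<le> norm (f x)" using norm_fst_le[of "fst (f x)" "snd (f x)"] by simp
    then show "norm (fst (f x)) \<le> B1" using b1 x by auto
  qed
qed

lemma BL_snd: assumes "BL S f" shows "BL S (\<lambda>x. snd (f x))"
proof -
  obtain L1 where 1: "L1-lipschitz_on S f" using assms BL_lip by blast
  obtain B1 where b1: "\<forall>x\<in>S. norm (f x) \<le> B1" using assms BL_bound by blast
  have "L1-lipschitz_on S (\<lambda>x. snd (f x))"
  proof (rule lipschitz_onI)
    fix x y assume xy: "x \<in> S" "y \<in> S"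
    have "dist (snd (f x)) (snd (f y)) \<le> dist (f x) (f y)" by (rule dist_snd_le)
    also have "\<dots> \<le> L1 * dist x y" using lipschitz_onD[OF 1 xy] .
    finally show "dist (snd (f x)) (snd (f y)) \<le> L1 * dist x y" .
  qed (use 1 lipschitz_on_nonneg in auto)
  then show ?thesis
  proof (rule BLI[of _ _ _ B1])
    fix x assume x: "x \<in> S"
    have "norm (snd (f x)) \<le> norm (f x)" using norm_snd_le[of "snd (f x)" "fst (f x)"] by simp
    then show "norm (snd (f x)) \<le> B1" using b1 x by auto
  qed
qed

lemma BL_Pair: assumes "BL S f" "BL S g" shows "BL S (\<lambda>x. (f x, g x))"
proof -
  obtain L1 where 1: "L1-lipschitz_on S f" using assms(1) BL_lip by blast
  obtain L2 where 2: "L2-lipschitz_on S g" using assms(2) BL_lip by blast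
  obtain B1 where b1: "\<forall>x\<in>S. norm (f x) \<le> B1" using assms(1) BL_bound by blast
  obtain B2 where b2: "\<forall>x\<in>S. norm (g x) \<le> B2" using assms(2) BL_bound by blast
  have L10: "L1 \<ge> 0" using 1 lipschitz_on_nonneg by blast
  have L20: "L2 \<ge> 0" using 2 lipschitz_on_nonneg by blast
  have "(L1+L2)-lipschitz_on S (\<lambda>x. (f x, g x))"
  proof (rule lipschitz_onI)
    fix x y assume xy: "x \<in> S" "y \<in> S"
    have "dist (f x, g x) (f y, g y) \<le> dist (f x) (f y) + dist (g x) (g y)"
      unfolding dist_Pair_Pair by (rule sqrt_sum_squares_le_sum) auto
    also have "\<dots> \<le> L1 * dist x y + L2 * dist x y"
      using lipschitz_onD[OF 1 xy] lipschitz_onD[OF 2 xy] by simp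
    finally show "dist (f x, g x) (f y, g y) \<le> (L1 + L2) * dist x y" by (simp add: algebra_simps)
  qed (use L10 L20 in auto)
  then show ?thesis
  proof (rule BLI[of _ _ _ "B1 + B2"])
    fix x assume "x \<in> S"
    have "norm (f x, g x) \<le> norm (f x) + norm (g x)" unfolding norm_Pair by (rule sqrt_sum_squares_le_sum) auto
    also have "\<dots> \<le> B1 + B2" using b1 b2 \<open>x \<in> S\<close> by (intro add_mono) auto
    finally show "norm (f x, g x) \<le> B1 + B2" .
  qed
qed

lemma BL_pow: assumes "BL S f" shows "BL S (\<lambda>x. (f x :: real) ^ n)"
proof (induction n)
  case 0 then show ?case using BL_const[of S "1::real"] by simp
next
  case (Suc n) then show ?case using BL_mult[OF assms Suc] by simp
qed

lemma BL_inverse: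
  fixes f :: "'a::metric_space \<Rightarrow> real"
  assumes f: "BL S f" and m: "m > 0" "\<And>x. x \<in> S \<Longrightarrow> f x \<ge> m"
  shows "BL S (\<lambda>x. 1 / f x)"
proof -
  obtain L1 where 1: "L1-lipschitz_on S f" using f BL_lip by blast
  have L10: "L1 \<ge> 0" using 1 lipschitz_on_nonneg by blast
  have "(L1 / m^2)-lipschitz_on S (\<lambda>x. 1 / f x)"
  proof (rule lipschitz_onI)
    fix x y assume xy: "x \<in> S" "y \<in> S"
    have fx: "f x \<ge> m" "f y \<ge> m" using m xy by auto
    have "dist (1 / f x) (1 / f y) = \<bar>f y - f x\<bar> / (f x * f y)"
      using fx m by (simp add: dist_real_def field_simps abs_div)
    also have "\<dots> \<le> \<bar>f y - f x\<bar> / m^2"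
      using fx m by (intro divide_left_mono) (auto simp: power2_eq_square intro: mult_mono)
    also have "\<dots> \<le> (L1 * dist x y) / m^2"
      using lipschitz_onD[OF 1 xy] m by (intro divide_right_mono) (auto simp: dist_real_def abs_minus_commute)
    finally show "dist (1 / f x) (1 / f y) \<le> L1 / m\<^sup>2 * dist x y" by simp
  qed (use L10 m in auto)
  then show ?thesis
  proof (rule BLI[of _ _ _ "1/m"])
    fix x assume "x \<in> S" then have "f x \<ge> m" using m by auto
    then show "norm (1 / f x) \<le> 1 / m" using m by (simp add: frac_le)
  qed
qed

lemma BL_sqrt:
  fixes f :: "'a::metric_space \<Rightarrow> real"
  assumes f: "BL S f" and m: "m > 0" "\<And>x. x \<in> S \<Longrightarrow> f x \<ge> m"
  shows "BL S (\<lambda>x. sqrt (f x))"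
proof -
  obtain L1 where 1: "L1-lipschitz_on S f" using f BL_lip by blast
  obtain B1 where b1: "\<forall>x\<in>S. norm (f x) \<le> B1" using f BL_bound by blast
  have L10: "L1 \<ge> 0" using 1 lipschitz_on_nonneg by blast
  have "(L1 / sqrt m)-lipschitz_on S (\<lambda>x. sqrt (f x))"
  proof (rule lipschitz_onI)
    fix x y assume xy: "x \<in> S" "y \<in> S"
    have fx: "f x \<ge> m" "f y \<ge> m" using m xy by auto
    have "sqrt (f x) \<ge> sqrt m" using fx by simp
    moreover have "sqrt (f y) \<ge> 0" using fx m by simp
    ultimately have sp: "sqrt (f x) + sqrt (f y) \<ge> sqrt m" by linarith
    have "(sqrt (f x) - sqrt (f y)) * (sqrt (f x) + sqrt (f y)) = f x - f y"
      using fx m by (simp add: algebra_simps)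
    moreover have "sqrt (f x) + sqrt (f y) > 0" using sp m real_sqrt_gt_zero[of m] by linarith
    ultimately have "sqrt (f x) - sqrt (f y) = (f x - f y) / (sqrt (f x) + sqrt (f y))"
      by (simp add: eq_divide_eq)
    then have "dist (sqrt (f x)) (sqrt (f y)) = \<bar>f x - f y\<bar> / (sqrt (f x) + sqrt (f y))"
      using \<open>sqrt (f x) + sqrt (f y) > 0\<close> by (simp add: dist_real_def abs_divide)
    also have "\<dots> \<le> \<bar>f x - f y\<bar> / sqrt m"
      using sp m \<open>sqrt (f x) + sqrt (f y) > 0\<close> by (intro divide_left_mono mult_pos_pos) auto
    also have "\<dots> \<le> (L1 * dist x y) / sqrt m"
      using lipschitz_onD[OF 1 xy] m by (intro divide_right_mono) (auto simp: dist_real_def)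
    finally show "dist (sqrt (f x)) (sqrt (f y)) \<le> L1 / sqrt m * dist x y" by simp
  qed (use L10 m in auto)
  then show ?thesis
  proof (rule BLI[of _ _ _ "sqrt (max B1 0)"])
    fix x assume "x \<in> S" then have "f x \<le> B1" "f x \<ge> 0" using b1 m by force+
    then show "norm (sqrt (f x)) \<le> sqrt (max B1 0)" by simp
  qed
qed

lemma BL_real_C1:
  fixes g g' :: "real \<Rightarrow> real"
  assumes ab: "a \<le> b" and d: "\<And>x. x \<in> {a..b} \<Longrightarrow> (g has_real_derivative g' x) (at x)"
    and c: "continuous_on {a..b} g'"
  shows "BL {a..b} g"
proof -
  have "bounded (g' ` {a..b})" using compact_imp_bounded[OF compact_continuous_image[OF c compact_Icc]] .
  then obtain B where B0: "\<forall>x\<in>{a..b}. norm (g' x) \<le> B" unfolding bounded_iff by blast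
  then have B: "\<And>x. x \<in> {a..b} \<Longrightarrow> norm (g' x) \<le> B" by blast
  have gc: "continuous_on {a..b} g" using d by (meson DERIV_isCont continuous_at_imp_continuous_on)
  have "bounded (g ` {a..b})" using compact_imp_bounded[OF compact_continuous_image[OF gc compact_Icc]] .
  then obtain C where C0: "\<forall>x\<in>{a..b}. norm (g x) \<le> C" unfolding bounded_iff by blast
  then have C: "\<And>x. x \<in> {a..b} \<Longrightarrow> norm (g x) \<le> C" by blast
  have "(max B 0)-lipschitz_on {a..b} g"
  proof (rule lipschitz_onI)
    fix x y assume xy: "x \<in> {a..b}" "y \<in> {a..b}"
    show "dist (g x) (g y) \<le> max B 0 * dist x y"
    proof (cases "x = y")
      case False
      define p where "p = min x y" define q where "q = max x y"
      have pq: "p < q" "p \<in> {a..b}" "q \<in> {a..b}" using False xy by (auto simp: p_def q_def)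
      obtain z where z: "p < z" "z < q" "g q - g p = (q - p) * g' z"
        proof -
        have H: "\<And>x. p \<le> x \<Longrightarrow> x \<le> q \<Longrightarrow> DERIV g x :> g' x" using d pq by auto
        from MVT2[OF pq(1) H] show ?thesis using that by blast
      qed
      have zab: "z \<in> {a..b}" using z pq by auto
      have "dist (g x) (g y) = \<bar>g q - g p\<bar>" by (auto simp: p_def q_def dist_real_def min_def max_def)
      also have "\<dots> = (q - p) * \<bar>g' z\<bar>" using z pq by (simp add: abs_mult)
      also have "\<dots> \<le> (q - p) * max B 0" using B[OF zab] pq by (intro mult_left_mono) auto
      also have "q - p = dist x y" by (auto simp: p_def q_def dist_real_def)
      finally show ?thesis by (simp add: mult.commute)
    qed simp
  qed simp
  then show ?thesis by (rule BLI) (rule C)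
qed

lemma BL_PS:
  assumes "R1 c" "0 \<le> X" "X < 1"
  shows "BL {0..X} (PS c)"
proof (rule BL_real_C1[OF assms(2)])
  fix x assume x: "x \<in> {0..X}"
  then have "norm x < 1" using assms by auto
  then show "(PS c has_real_derivative PS (diffs c) x) (at x)" by (rule PS_deriv[OF assms(1)])
next
  have "\<forall>x\<in>{0..X}. isCont (PS (diffs c)) x"
    using PS_deriv[OF R1_diffs[OF assms(1)]] assms DERIV_isCont by force
  then show "continuous_on {0..X} (PS (diffs c))" by (simp add: continuous_at_imp_continuous_on)
qed

lemma picard_local:
  fixes F :: "'a::banach \<Rightarrow> 'a" and x0 :: 'a
  assumes lip: "L-lipschitz_on UNIV F" and bnd: "\<And>x. norm (F x) \<le> K"
    and dpos: "0 < d" and dL: "d * L < 1"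
  shows "\<exists>X. X t0 = x0 \<and> (\<forall>t\<in>{t0..t0+d}. (X has_vector_derivative F (X t)) (at t within {t0..t0+d}))
             \<and> (\<forall>t\<in>{t0..t0+d}. norm (X t - x0) \<le> K * d)"
proof -
  define cl where "cl t = max t0 (min (t0+d) t)" for t :: real
  have cl_in: "cl t \<in> {t0..t0+d}" for t using dpos by (auto simp: cl_def)
  have cl_id: "t \<in> {t0..t0+d} \<Longrightarrow> cl t = t" for t by (auto simp: cl_def)
  have cl_cont: "continuous_on UNIV cl" unfolding cl_def by (intro continuous_intros)
  have L0: "L \<ge> 0" using lip lipschitz_on_nonneg by blast
  have K0: "K \<ge> 0" using bnd[of x0] norm_ge_zero order_trans by blast
  have Fcont: "continuous_on UNIV F" using lip lipschitz_on_continuous_on by blast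
  have Fx_cont: "continuous_on S (\<lambda>s. F (apply_bcontfun x s))" for x :: "real \<Rightarrow>\<^sub>C 'a" and S
    by (rule continuous_on_compose2[OF Fcont]) auto
  define G where "G x t = x0 + integral {t0..cl t} (\<lambda>s. F (apply_bcontfun x s))" for x :: "real \<Rightarrow>\<^sub>C 'a" and t
  have Gb: "G x \<in> bcontfun" for x
  proof (rule bcontfun_normI)
    have "continuous_on {t0..t0+d} (\<lambda>t. integral {t0..t} (\<lambda>s. F (apply_bcontfun x s)))"
      by (intro indefinite_integral_continuous_1 integrable_continuous_interval Fx_cont)
    then have "continuous_on UNIV (\<lambda>t. integral {t0..cl t} (\<lambda>s. F (apply_bcontfun x s)))"
      by (rule continuous_on_compose2[OF _ cl_cont]) (use cl_in in auto)
    then show "continuous_on UNIV (G x)" unfolding G_def by (intro continuous_intros)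
    fix t
    have "norm (integral {t0..cl t} (\<lambda>s. F (apply_bcontfun x s))) \<le> K * (cl t - t0)"
      by (rule integral_bound) (use cl_in in \<open>auto intro: Fx_cont bnd\<close>)
    also have "\<dots> \<le> K * d" using cl_in[of t] K0 by (intro mult_left_mono) auto
    finally show "norm (G x t) \<le> norm x0 + K * d" unfolding G_def
      by (meson add_left_mono norm_triangle_ineq order_trans)
  qed
  define Phi where "Phi x = Bcontfun (G x)" for x
  have Phi_app: "apply_bcontfun (Phi x) t = G x t" for x t
    unfolding Phi_def using Gb by (simp add: Bcontfun_inverse)
  have contr: "dist (Phi x) (Phi y) \<le> (d * L) * dist x y" for x y
  proof (rule dist_bound)
    fix t
    have "dist (Phi x t) (Phi y t) = norm (integral {t0..cl t} (\<lambda>s. F (apply_bcontfun x s) - F (apply_bcontfun y s)))"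
      unfolding Phi_app G_def dist_norm
      by (subst integral_diff) (auto intro!: integrable_continuous_interval Fx_cont)
    also have "\<dots> \<le> (L * dist x y) * (cl t - t0)"
    proof (rule integral_bound)
      show "t0 \<le> cl t" using cl_in[of t] by auto
      show "continuous_on {t0..cl t} (\<lambda>s. F (apply_bcontfun x s) - F (apply_bcontfun y s))"
        by (intro continuous_intros Fx_cont)
      fix s
      have "norm (F (apply_bcontfun x s) - F (apply_bcontfun y s)) \<le> L * dist (apply_bcontfun x s) (apply_bcontfun y s)"
        using lipschitz_onD[OF lip] by (simp add: dist_norm)
      also have "\<dots> \<le> L * dist x y" using L0 dist_bounded by (intro mult_left_mono) auto
      finally show "norm (F (apply_bcontfun x s) - F (apply_bcontfun y s)) \<le> L * dist x y" .
    qed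
    also have "\<dots> \<le> (L * dist x y) * d" using cl_in[of t] L0 by (intro mult_left_mono) auto
    finally show "dist (Phi x t) (Phi y t) \<le> (d * L) * dist x y" by (simp add: algebra_simps)
  qed
  obtain x where fx: "Phi x = x"
    using banach_fix_type[of "d * L" Phi] contr dL dpos L0 by auto
  define X where "X = apply_bcontfun x"
  have XG: "X t = G x t" for t unfolding X_def by (metis fx Phi_app)
  have XF: "continuous_on {t0..t0+d} (\<lambda>s. F (X s))" unfolding X_def by (rule Fx_cont)
  show ?thesis
  proof (intro exI conjI ballI)
    show "X t0 = x0" unfolding XG G_def using dpos by (simp add: cl_def)
    fix t assume t: "t \<in> {t0..t0+d}"
    have dI: "((\<lambda>t. x0 + integral {t0..t} (\<lambda>s. F (X s))) has_vector_derivative F (X t)) (at t within {t0..t0+d})"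
      using has_vector_derivative_add[OF has_vector_derivative_const integral_has_vector_derivative[OF XF t], of x0] by simp
    moreover have eqX: "x0 + integral {t0..x'} (\<lambda>s. F (X s)) = X x'" if "x' \<in> {t0..t0+d}" for x'
      using XG[of x'] that by (simp add: G_def cl_id X_def)
    ultimately show "(X has_vector_derivative F (X t)) (at t within {t0..t0+d})"
      by (intro has_vector_derivative_transform_within[where d=1, OF dI _ t]) (use eqX in auto)
    have "norm (X t - x0) = norm (integral {t0..t} (\<lambda>s. F (X s)))" using eqX[OF t] by (metis add_diff_cancel_left')
    also have "\<dots> \<le> K * (t - t0)"
      by (rule integral_bound) (use t XF bnd in \<open>auto intro: continuous_on_subset\<close>)
    also have "\<dots> \<le> K * d" using t K0 by (intro mult_left_mono) auto
    finally show "norm (X t - x0) \<le> K * d" .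
  qed
qed

definition gm :: "real^3 \<Rightarrow> real" where "gm u = 1 / sqrt (1 - u \<bullet> u)"

lemma gam_eq: "gam u = gm u"
  by (simp add: gam_def gm_def norm_sq_inner)

definition Mv :: "(real^3 \<Rightarrow> real) \<Rightarrow> real^3 \<Rightarrow> real^3 \<Rightarrow> real^3" where
  "Mv rho u y = gm u *\<^sub>R y + (gm u ^ 3 * (u \<bullet> y)) *\<^sub>R u
     + (3 * m_e rho) *\<^sub>R (PS cphi (u \<bullet> u) *\<^sub>R y + (2 * PS (diffs cphi) (u \<bullet> u) * (u \<bullet> y)) *\<^sub>R u)"

lemma PS_zero: "PS c 0 = c 0"
  unfolding PS_def by (rule powser_zero)

lemma mmat_mv:
  assumes u: "norm u < 1"
  shows "mmat rho u *v y = Mv rho u y"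
proof -
  have m0: "m0 u *v y = gm u *\<^sub>R y + (gm u ^ 3 * (u \<bullet> y)) *\<^sub>R u"
    by (simp add: m0_def mv_add mv_scaleR idm_mv outer_mv gam_eq)
  have mf: "mf rho u *v y = (3 * m_e rho) *\<^sub>R (PS cphi (u \<bullet> u) *\<^sub>R y + (2 * PS (diffs cphi) (u \<bullet> u) * (u \<bullet> y)) *\<^sub>R u)"
  proof (cases "u = 0")
    case True
    then show ?thesis by (simp add: mf_def mv_add mv_scaleR idm_mv outer_mv phi_def PS_zero cphi_def)
  next
    case False
    then have n: "0 < norm u" "norm u < 1" using u by auto
    have p1: "phi (norm u) = PS cphi (u \<bullet> u)" using phi_series[OF n] by (simp add: norm_sq_inner)
    have p2: "deriv phi (norm u) / norm u = 2 * PS (diffs cphi) (u \<bullet> u)"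
      using deriv_phi[OF n] n by (simp add: norm_sq_inner)
    show ?thesis unfolding mf_def mv_scaleR mv_add idm_mv outer_mv p1 p2 by (simp add: algebra_simps)
  qed
  show ?thesis unfolding mmat_def mv_add m0 mf Mv_def ..
qed

definition kB :: "(real^3 \<Rightarrow> real) \<Rightarrow> real" where "kB rho = (charge rho)^2 / (4 * pi)"

lemma bvec_eq: "bvec rho u w = kB rho *\<^sub>R ((2 * gm u ^ 6 * (u \<bullet> w)) *\<^sub>R w + (gm u ^ 6 * (w \<bullet> w)) *\<^sub>R u + (6 * gm u ^ 8 * (u \<bullet> w)^2) *\<^sub>R u)"
  by (simp add: bvec_def kB_def gam_eq power2_norm_eq_inner)

lemma BL_divc: "BL S f \<Longrightarrow> BL S (\<lambda>x. f x / (c::real))"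
  using BL_mult[OF _ BL_const[of S "1/c"], of f] by simp

lemma BL_s:
  assumes U: "BL S Uf" and b: "\<And>x. x \<in> S \<Longrightarrow> norm (Uf x) \<le> u1"
  shows "BL S (\<lambda>x. Uf x \<bullet> Uf x)" "\<And>x. x \<in> S \<Longrightarrow> Uf x \<bullet> Uf x \<le> u1^2" "\<And>x. x \<in> S \<Longrightarrow> 0 \<le> Uf x \<bullet> Uf x"
proof -
  show "BL S (\<lambda>x. Uf x \<bullet> Uf x)" by (rule BL_inner[OF U U])
  fix x assume x: "x \<in> S"
  have "(norm (Uf x))^2 \<le> u1^2" using b[OF x] by (intro power_mono) auto
  then show "Uf x \<bullet> Uf x \<le> u1^2" by (simp add: power2_norm_eq_inner)
  show "0 \<le> Uf x \<bullet> Uf x" by simp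
qed

lemma BL_gm:
  assumes U: "BL S Uf" and b: "\<And>x. x \<in> S \<Longrightarrow> norm (Uf x) \<le> u1" and u1: "u1 < 1" "0 \<le> u1"
  shows "BL S (\<lambda>x. gm (Uf x))"
proof -
  have m: "1 - u1^2 > 0" using u1 by (simp add: power_less_one_iff abs_less_iff)
  have 1: "BL S (\<lambda>x. 1 - Uf x \<bullet> Uf x)" by (rule BL_diff[OF BL_const BL_s(1)[OF U b]])
  have 2: "BL S (\<lambda>x. sqrt (1 - Uf x \<bullet> Uf x))"
    by (rule BL_sqrt[OF 1 m]) (use BL_s(2)[OF U b] in auto)
  have 3: "BL S (\<lambda>x. 1 / sqrt (1 - Uf x \<bullet> Uf x))"
    by (rule BL_inverse[OF 2, of "sqrt (1 - u1^2)"]) (use m BL_s(2)[OF U b] in auto)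
  then show ?thesis unfolding gm_def .
qed

lemma BL_PSc:
  assumes c: "R1 c" and U: "BL S Uf" and b: "\<And>x. x \<in> S \<Longrightarrow> norm (Uf x) \<le> u1" and u1: "u1 < 1" "0 \<le> u1"
  shows "BL S (\<lambda>x. PS c (Uf x \<bullet> Uf x))"
proof (rule BL_compose[OF BL_s(1)[OF U b]])
  show "(\<lambda>x. Uf x \<bullet> Uf x) ` S \<subseteq> {0..u1^2}" using BL_s(2,3)[OF U b] by auto
  show "BL {0..u1^2} (PS c)" using u1 by (intro BL_PS[OF c]) (auto simp: power_less_one_iff abs_less_iff)
qed

lemma BL_Mv:
  assumes U: "BL S Uf" and Y: "BL S Yf" and b: "\<And>x. x \<in> S \<Longrightarrow> norm (Uf x) \<le> u1" and u1: "u1 < 1" "0 \<le> u1"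
  shows "BL S (\<lambda>x. Mv rho (Uf x) (Yf x))"
proof -
  have g: "BL S (\<lambda>x. gm (Uf x))" by (rule BL_gm[OF U b u1])
  have p0: "BL S (\<lambda>x. PS cphi (Uf x \<bullet> Uf x))" by (rule BL_PSc[OF R1_cphi U b u1])
  have p1: "BL S (\<lambda>x. PS (diffs cphi) (Uf x \<bullet> Uf x))" by (rule BL_PSc[OF R1_diffs[OF R1_cphi] U b u1])
  have uy: "BL S (\<lambda>x. Uf x \<bullet> Yf x)" by (rule BL_inner[OF U Y])
  have t1: "BL S (\<lambda>x. gm (Uf x) *\<^sub>R Yf x)" by (rule BL_scaleR[OF g Y])
  have t2: "BL S (\<lambda>x. (gm (Uf x) ^ 3 * (Uf x \<bullet> Yf x)) *\<^sub>R Uf x)"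
    by (rule BL_scaleR[OF BL_mult[OF BL_pow[OF g] uy] U])
  have t3: "BL S (\<lambda>x. (3 * m_e rho) *\<^sub>R (PS cphi (Uf x \<bullet> Uf x) *\<^sub>R Yf x + (2 * PS (diffs cphi) (Uf x \<bullet> Uf x) * (Uf x \<bullet> Yf x)) *\<^sub>R Uf x))"
    by (rule BL_scaleR[OF BL_const BL_add[OF BL_scaleR[OF p0 Y] BL_scaleR[OF BL_mult[OF BL_mult[OF BL_const p1] uy] U]]])
  show ?thesis unfolding Mv_def by (rule BL_add[OF BL_add[OF t1 t2] t3])
qed

lemma BL_bvec:
  assumes U: "BL S Uf" and Y: "BL S Yf" and b: "\<And>x. x \<in> S \<Longrightarrow> norm (Uf x) \<le> u1" and u1: "u1 < 1" "0 \<le> u1"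
  shows "BL S (\<lambda>x. bvec rho (Uf x) (Yf x))"
proof -
  have g: "BL S (\<lambda>x. gm (Uf x))" by (rule BL_gm[OF U b u1])
  have uy: "BL S (\<lambda>x. Uf x \<bullet> Yf x)" by (rule BL_inner[OF U Y])
  have yy: "BL S (\<lambda>x. Yf x \<bullet> Yf x)" by (rule BL_inner[OF Y Y])
  have t1: "BL S (\<lambda>x. (2 * gm (Uf x) ^ 6 * (Uf x \<bullet> Yf x)) *\<^sub>R Yf x)"
    by (rule BL_scaleR[OF BL_mult[OF BL_mult[OF BL_const BL_pow[OF g]] uy] Y])
  have t2: "BL S (\<lambda>x. (gm (Uf x) ^ 6 * (Yf x \<bullet> Yf x)) *\<^sub>R Uf x)"
    by (rule BL_scaleR[OF BL_mult[OF BL_pow[OF g] yy] U])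
  have t3: "BL S (\<lambda>x. (6 * gm (Uf x) ^ 8 * (Uf x \<bullet> Yf x)^2) *\<^sub>R Uf x)"
    by (rule BL_scaleR[OF BL_mult[OF BL_mult[OF BL_const BL_pow[OF g]] BL_pow[OF uy]] U])
  show ?thesis unfolding bvec_eq by (rule BL_scaleR[OF BL_const BL_add[OF BL_add[OF t1 t2] t3]])
qed

lemma BL_Ainv:
  assumes U: "BL S Uf" and W: "BL S Wf" and b: "\<And>x. x \<in> S \<Longrightarrow> norm (Uf x) \<le> u1" and u1: "u1 < 1" "0 \<le> u1"
  shows "BL S (\<lambda>x. Ainv rho (Uf x) (Wf x))"
proof -
  have s: "BL S (\<lambda>x. Uf x \<bullet> Uf x)" by (rule BL_s(1)[OF U b])
  have c1: "BL S (\<lambda>x. (1 - Uf x \<bullet> Uf x)^2 / kA rho)" by (rule BL_divc[OF BL_pow[OF BL_diff[OF BL_const s]]])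
  have c2: "BL S (\<lambda>x. 1 / (1 + 3 * (Uf x \<bullet> Uf x)))"
    by (rule BL_inverse[OF BL_add[OF BL_const BL_mult[OF BL_const s]], of 1]) (use BL_s(3)[OF U b] in auto)
  have c3: "BL S (\<lambda>x. 4 * (1 / (1 + 3 * (Uf x \<bullet> Uf x))) * (Uf x \<bullet> Wf x))"
    by (rule BL_mult[OF BL_mult[OF BL_const c2] BL_inner[OF U W]])
  have "BL S (\<lambda>x. ((1 - Uf x \<bullet> Uf x)^2 / kA rho) *\<^sub>R (Wf x - (4 * (1 / (1 + 3 * (Uf x \<bullet> Uf x))) * (Uf x \<bullet> Wf x)) *\<^sub>R Uf x))"
    by (rule BL_scaleR[OF c1 BL_diff[OF W BL_scaleR[OF c3 U]]])
  then show ?thesis unfolding Ainv_def by simp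
qed

lemma hvd_fst: "(f has_vector_derivative f') F \<Longrightarrow> ((\<lambda>t. fst (f t)) has_vector_derivative fst f') F"
  unfolding has_vector_derivative_def by (drule has_derivative_fst) simp

lemma hvd_snd: "(f has_vector_derivative f') F \<Longrightarrow> ((\<lambda>t. snd (f t)) has_vector_derivative snd f') F"
  unfolding has_vector_derivative_def by (drule has_derivative_snd) simp

lemma mv_scaleR_right: "(A::real^3^3) *v (c *\<^sub>R v) = c *\<^sub>R (A *v v)"
  by (simp add: vec_eq_iff matrix_vector_mult_def sum_distrib_left algebra_simps)

lemma norm_fst_le': "norm (fst z) \<le> norm z"
  using norm_fst_le[of "fst z" "snd z"] by simp

lemma norm_snd_le': "norm (snd z) \<le> norm z"
  using norm_snd_le[of "snd z" "fst z"] by simp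

lemma inv_equation:
  fixes gradV :: "real^3 \<Rightarrow> real^3" and h :: "((real^3) \<times> (real^3)) \<Rightarrow> real^3"
    and Dh :: "((real^3) \<times> (real^3)) \<Rightarrow> ((real^3) \<times> (real^3)) \<Rightarrow>\<^sub>L (real^3)"
    and amod mmod :: "real^3 \<Rightarrow> real^3^3" and bmod :: "real^3 \<Rightarrow> real^3 \<Rightarrow> real^3"
  assumes gBL: "BL UNIV gradV"
    and ch: "charge rho \<noteq> 0" and eps: "eps > 0"
    and u1: "0 \<le> ub" "ub < u1" "u1 < 1"
    and agree: "\<forall>v. norm v \<le> u1 \<longrightarrow> amod v = amat rho v \<and> mmod v = mmat rho v \<and> (\<forall>w. bmod v w = bvec rho v w)"
    and hd: "\<And>x. (h has_derivative blinfun_apply (Dh x)) (at x)"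
    and inv: "invariant_graph eps amod mmod bmod gradV h"
    and u0: "norm u0 \<le> ub"
  shows "Mv rho u0 (h (r0,u0)) + gradV r0 - eps *\<^sub>R bvec rho u0 (h (r0,u0)) = eps *\<^sub>R (amat rho u0 *v Dh (r0,u0) (u0, h (r0,u0)))"
proof -
  define y0 where "y0 = h (r0, u0)"
  define x0 where "x0 = (r0, u0, y0)"
  define \<rho> where "\<rho> = u1 - ub"
  have \<rho>: "\<rho> > 0" using u1 by (simp add: \<rho>_def)
  define S where "S = cball x0 \<rho>"
  define Rf where "Rf x = fst x" for x :: "(real^3) \<times> (real^3) \<times> (real^3)"
  define Uf where "Uf x = fst (snd x)" for x :: "(real^3) \<times> (real^3) \<times> (real^3)"
  define Yf where "Yf x = snd (snd x)" for x :: "(real^3) \<times> (real^3) \<times> (real^3)"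
  define F3 where "F3 x = (1/eps) *\<^sub>R Ainv rho (Uf x) (Mv rho (Uf x) (Yf x) + gradV (Rf x) - eps *\<^sub>R bvec rho (Uf x) (Yf x))" for x
  define Fld where "Fld x = (Uf x, Yf x, F3 x)" for x
  have Ub: "norm (Uf x) \<le> u1" if "x \<in> S" for x
  proof -
    have "norm (Uf x - u0) = norm (fst (snd (x - x0)))" by (simp add: Uf_def x0_def)
    also have "\<dots> \<le> norm (x - x0)" using norm_fst_le' norm_snd_le' order_trans by blast
    also have "\<dots> \<le> \<rho>" using that by (simp add: S_def dist_norm norm_minus_commute)
    finally have "norm (Uf x - u0) \<le> \<rho>" .
    then have "norm (Uf x) \<le> norm u0 + \<rho>" by (metis add.commute diff_add_cancel norm_triangle_le add_right_mono)
    then show ?thesis using u0 by (simp add: \<rho>_def)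
  qed
  have u10: "0 \<le> u1" using u1 by simp
  have bS: "bounded S" by (simp add: S_def)
  have Id: "BL S (\<lambda>x. x)" by (rule BL_id[OF bS])
  have U: "BL S Uf" unfolding Uf_def by (rule BL_fst[OF BL_snd[OF Id]])
  have Y: "BL S Yf" unfolding Yf_def by (rule BL_snd[OF BL_snd[OF Id]])
  have G: "BL S (\<lambda>x. gradV (Rf x))" unfolding Rf_def by (rule BL_compose[OF BL_fst[OF Id] _ gBL]) auto
  have F3: "BL S F3" unfolding F3_def
    by (rule BL_scaleR[OF BL_const BL_Ainv[OF U BL_diff[OF BL_add[OF BL_Mv[OF U Y Ub u1(3) u10] G] BL_scaleR[OF BL_const BL_bvec[OF U Y Ub u1(3) u10]]] Ub u1(3) u10]])
  have "BL S Fld" unfolding Fld_def by (rule BL_Pair[OF U BL_Pair[OF Y F3]])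
  then obtain L K where L: "L-lipschitz_on S Fld" and K: "\<forall>x\<in>S. norm (Fld x) \<le> K"
    using BL_lip BL_bound by blast
  have x0S: "x0 \<in> S" using \<rho> by (simp add: S_def)
  have K0: "K \<ge> 0" using K x0S norm_ge_zero order_trans by blast
  have L0: "L \<ge> 0" using L lipschitz_on_nonneg by blast
  have cS: "convex S" "closed S" "S \<noteq> {}" using x0S by (auto simp: S_def)
  define Fg where "Fg x = Fld (closest_point S x)" for x
  have cp1: "1-lipschitz_on UNIV (closest_point S)"
    by (rule lipschitz_onI) (use closest_point_lipschitz[OF cS] in auto)
  have "(L*1)-lipschitz_on UNIV Fg" unfolding Fg_def
    by (rule lipschitz_on_compose2[OF cp1 lipschitz_on_subset[OF L]]) (use closest_point_in_set[OF cS(2,3)] in auto)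
  then have Lg: "L-lipschitz_on UNIV Fg" by simp
  have Kg: "norm (Fg x) \<le> K" for x unfolding Fg_def using K closest_point_in_set[OF cS(2,3)] by blast
  define d where "d = min (\<rho> / (K+1)) (1 / (2*(L+1)))"
  have d0: "d > 0" using \<rho> K0 L0 by (simp add: d_def)
  have dL: "d * L < 1"
  proof -
    have "d * L \<le> (1 / (2*(L+1))) * L" using L0 by (intro mult_right_mono) (auto simp: d_def)
    also have "\<dots> < 1" using L0 by (simp add: field_simps)
    finally show ?thesis .
  qed
  have Kd: "K * d \<le> \<rho>"
  proof -
    have "K * d \<le> K * (\<rho> / (K+1))" using K0 by (intro mult_left_mono) (auto simp: d_def)
    also have "\<dots> \<le> \<rho>" using K0 \<rho> by (simp add: field_simps)
    finally show ?thesis .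
  qed
  obtain X where X0: "X 0 = x0" and Xd: "\<forall>t\<in>{0..0+d}. (X has_vector_derivative Fg (X t)) (at t within {0..0+d})"
    and Xb: "\<forall>t\<in>{0..0+d}. norm (X t - x0) \<le> K * d"
    using picard_local[OF Lg Kg d0 dL, of 0 x0] by blast
  let ?T = "{0..d}"
  have XS: "X t \<in> S" if "t \<in> ?T" for t
  proof -
    have "norm (X t - x0) \<le> K * d" using Xb that by auto
    then show ?thesis using Kd by (simp add: S_def dist_norm norm_minus_commute)
  qed
  have XD: "(X has_vector_derivative Fld (X t)) (at t within ?T)" if "t \<in> ?T" for t
  proof -
    have "(X has_vector_derivative Fg (X t)) (at t within ?T)" using Xd that by auto
    then show ?thesis using closest_point_self[OF XS[OF that]] by (simp add: Fg_def)
  qed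
  define R where "R t = Rf (X t)" for t
  define U where "U t = Uf (X t)" for t
  define Yt where "Yt t = Yf (X t)" for t
  have Rfun: "R = (\<lambda>t. fst (X t))" by (simp add: fun_eq_iff R_def Rf_def)
  have Ufun: "U = (\<lambda>t. fst (snd (X t)))" by (simp add: fun_eq_iff U_def Uf_def)
  have Yfun: "Yt = (\<lambda>t. snd (snd (X t)))" by (simp add: fun_eq_iff Yt_def Yf_def)
  have DR: "(R has_vector_derivative U t) (at t within ?T)" if "t \<in> ?T" for t
    using hvd_fst[OF XD[OF that]] unfolding Rfun Ufun by (simp add: Uf_def Fld_def)
  have DU: "(U has_vector_derivative Yt t) (at t within ?T)" if "t \<in> ?T" for t
    using hvd_fst[OF hvd_snd[OF XD[OF that]]] unfolding Ufun Yfun by (simp add: Yf_def Fld_def)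
  have DY0: "(Yt has_vector_derivative F3 (X t)) (at t within ?T)" if "t \<in> ?T" for t
    using hvd_snd[OF hvd_snd[OF XD[OF that]]] unfolding Yfun by (simp add: Fld_def)
  have F3eq: "F3 (X t) = (1 / eps) *\<^sub>R (matrix_inv (amod (U t)) *v (mmod (U t) *v Yt t + gradV (R t) - eps *\<^sub>R bmod (U t) (Yt t)))"
    if "t \<in> ?T" for t
  proof -
    have n: "norm (U t) \<le> u1" using Ub[OF XS[OF that]] by (simp add: U_def)
    then have n1: "norm (U t) < 1" using u1 by simp
    have a: "amod (U t) = amat rho (U t)" "mmod (U t) = mmat rho (U t)" "bmod (U t) (Yt t) = bvec rho (U t) (Yt t)"
      using agree n by auto
    have "F3 (X t) = (1/eps) *\<^sub>R Ainv rho (U t) (Mv rho (U t) (Yt t) + gradV (R t) - eps *\<^sub>R bvec rho (U t) (Yt t))"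
      by (simp add: F3_def U_def Yt_def R_def)
    then show ?thesis unfolding a matrix_inv_amat[OF n1 ch] mmat_mv[OF n1] .
  qed
  have on: "\<forall>t\<in>?T. Yt t = h (R t, U t)"
    using inv unfolding invariant_graph_def
  proof (elim allE impE)
    show "is_interval ?T \<and> 0 \<in> ?T \<and> (\<forall>t\<in>?T. (R has_vector_derivative U t) (at t within ?T) \<and>
               (U has_vector_derivative Yt t) (at t within ?T) \<and>
               (Yt has_vector_derivative (1 / eps) *\<^sub>R (matrix_inv (amod (U t)) *v
                     (mmod (U t) *v Yt t + gradV (R t) - eps *\<^sub>R bmod (U t) (Yt t)))) (at t within ?T)) \<and>
               Yt 0 = h (R 0, U 0)"
      using d0 DR DU DY0 F3eq X0 by (auto simp: is_interval_cc Yt_def R_def U_def Yf_def Rf_def Uf_def x0_def y0_def)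
  qed auto
  have RU0: "R 0 = r0" "U 0 = u0" "Yt 0 = y0" using X0 by (auto simp: R_def Rf_def U_def Uf_def Yt_def Yf_def x0_def)
  have "((\<lambda>t. h (R t, U t)) has_vector_derivative Dh (r0,u0) (u0, y0)) (at 0 within ?T)"
  proof -
    have p: "((\<lambda>t. (R t, U t)) has_vector_derivative (U 0, Yt 0)) (at 0 within ?T)"
      using DR DU d0 by (auto intro!: has_vector_derivative_Pair)
    have "((\<lambda>t. h (R t, U t)) has_derivative (\<lambda>s. blinfun_apply (Dh (R 0, U 0)) (s *\<^sub>R (U 0, Yt 0)))) (at 0 within ?T)"
      using has_derivative_compose[OF p[unfolded has_vector_derivative_def] hd] .
    then show ?thesis unfolding has_vector_derivative_def RU0 by (simp only: blinfun.scaleR_right)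
  qed
  then have "(Yt has_vector_derivative Dh (r0,u0) (u0, y0)) (at 0 within ?T)"
    by (rule has_vector_derivative_transform_within[where d=1]) (use on d0 in auto)
  moreover have "(Yt has_vector_derivative F3 x0) (at 0 within ?T)" using DY0[of 0] d0 X0 by simp
  ultimately have eq: "F3 x0 = Dh (r0,u0) (u0, y0)"
    using vector_derivative_unique_within_closed_interval[of 0 d 0] d0 by (simp add: cbox_interval)
  define W where "W = Mv rho u0 y0 + gradV r0 - eps *\<^sub>R bvec rho u0 y0"
  have "(1/eps) *\<^sub>R Ainv rho u0 W = Dh (r0,u0) (u0, y0)"
    using eq by (simp add: F3_def W_def x0_def Rf_def Uf_def Yf_def)
  then have "eps *\<^sub>R ((1/eps) *\<^sub>R Ainv rho u0 W) = eps *\<^sub>R Dh (r0,u0) (u0, y0)" by simp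
  then have "Ainv rho u0 W = eps *\<^sub>R Dh (r0,u0) (u0, y0)" using eps by simp
  then have "amat rho u0 *v Ainv rho u0 W = amat rho u0 *v (eps *\<^sub>R Dh (r0,u0) (u0, y0))" by simp
  then have "W = eps *\<^sub>R (amat rho u0 *v Dh (r0,u0) (u0, y0))"
    using A_Ainv[of u0 rho W] u0 u1 ch by (simp add: mv_scaleR_right)
  then show ?thesis by (simp add: W_def y0_def)
qed

lemma growth:
  fixes q q' :: "real \<Rightarrow> real"
  assumes d: "\<And>t. (q has_real_derivative q' t) (at t)"
    and g: "\<And>t. q' t \<ge> lam * q t" and lam: "lam > 0" and M: "\<And>t. q t \<le> M"
  shows "q t0 \<le> 0"
proof (rule ccontr)
  assume "\<not> q t0 \<le> 0" then have q0: "q t0 > 0" by simp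
  define e where "e t = q t * exp (- lam * t)" for t
  have de: "(e has_real_derivative (q' t - lam * q t) * exp (- lam * t)) (at t)" for t
    unfolding e_def by (auto intro!: derivative_eq_intros d simp: algebra_simps)
  define t1 where "t1 = t0 + (\<bar>M\<bar> + 1) / (lam * q t0)"
  have t1: "t0 \<le> t1" using lam q0 by (simp add: t1_def)
  have "e t0 \<le> e t1"
  proof (rule DERIV_nonneg_imp_nondecreasing[OF t1])
    fix x show "\<exists>y. DERIV e x :> y \<and> y \<ge> 0"
      using de[of x] g[of x] by (intro exI conjI) (auto intro!: mult_nonneg_nonneg)
  qed
  then have "q t0 * exp (- lam * t0) \<le> q t1 * exp (- lam * t1)" by (simp add: e_def)
  then have "q t0 * exp (- lam * t0) * exp (lam * t1) \<le> q t1 * exp (- lam * t1) * exp (lam * t1)"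
    by (intro mult_right_mono) auto
  then have "q t0 * exp (lam * (t1 - t0)) \<le> q t1"
    by (simp add: mult.assoc flip: exp_add) (simp add: algebra_simps)
  moreover have "q t0 * (1 + lam * (t1 - t0)) \<le> q t0 * exp (lam * (t1 - t0))"
    using q0 by (intro mult_left_mono) (auto simp: exp_ge_add_one_self add.commute)
  moreover have "q t0 * (1 + lam * (t1 - t0)) = q t0 + \<bar>M\<bar> + 1"
    using lam q0 by (simp add: t1_def field_simps)
  ultimately have "q t0 + \<bar>M\<bar> + 1 \<le> q t1" by linarith
  then show False using M[of t1] q0 by linarith
qed

lemma hvd_inner:
  fixes f g :: "real \<Rightarrow> 'a::real_inner"
  assumes "(f has_vector_derivative f') (at t)" "(g has_vector_derivative g') (at t)"
  shows "((\<lambda>t. f t \<bullet> g t) has_real_derivative (f' \<bullet> g t + f t \<bullet> g')) (at t)"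
proof -
  have "((\<lambda>t. f t \<bullet> g t) has_derivative (\<lambda>h. f t \<bullet> (h *\<^sub>R g') + (h *\<^sub>R f') \<bullet> g t)) (at t)"
    using has_derivative_inner[OF assms[unfolded has_vector_derivative_def]] .
  moreover have "(\<lambda>h. f t \<bullet> (h *\<^sub>R g') + (h *\<^sub>R f') \<bullet> g t) = (*) (f' \<bullet> g t + f t \<bullet> g')"
    by (simp add: fun_eq_iff algebra_simps)
  ultimately show ?thesis by (simp add: has_field_derivative_def)
qed

lemma m_e_nonneg: "m_e rho \<ge> 0"
proof -
  let ?f = "\<lambda>k::real^3. (cmod (rhohat rho k))^2 / (norm k)^2"
  have "integral UNIV ?f \<ge> 0"
  proof (cases "?f integrable_on UNIV")
    case True then show ?thesis by (rule integral_nonneg) auto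
  next
    case False then show ?thesis by (simp add: not_integrable_integral)
  qed
  then show ?thesis by (simp add: m_e_def)
qed

lemma PS_cphi_nonneg: "0 \<le> x \<Longrightarrow> x < 1 \<Longrightarrow> PS cphi x \<ge> 0"
  by (rule PS_nonneg[OF R1_cphi cphi_nonneg])

lemma PS_dcphi_nonneg: "0 \<le> x \<Longrightarrow> x < 1 \<Longrightarrow> PS (diffs cphi) x \<ge> 0"
  by (rule PS_nonneg[OF R1_diffs[OF R1_cphi] diffs_nonneg[OF cphi_nonneg]])

lemma gm_ge1: "norm u < 1 \<Longrightarrow> gm u \<ge> 1"
  using gam_ge1 gam_eq by metis

lemma uu_less1: "norm (u::real^3) < 1 \<Longrightarrow> u \<bullet> u < 1"
  by (simp flip: norm_sq_inner add: power_less_one_iff abs_less_iff)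

lemma Mv_pos:
  assumes u: "norm u < 1"
  shows "z \<bullet> Mv rho u z \<ge> z \<bullet> z"
proof -
  have g: "gm u \<ge> 1" by (rule gm_ge1[OF u])
  have s: "0 \<le> u \<bullet> u" "u \<bullet> u < 1" using uu_less1[OF u] by auto
  have p0: "PS cphi (u \<bullet> u) \<ge> 0" using PS_cphi_nonneg s by blast
  have p1: "PS (diffs cphi) (u \<bullet> u) \<ge> 0" using PS_dcphi_nonneg s by blast
  have me: "m_e rho \<ge> 0" by (rule m_e_nonneg)
  have "z \<bullet> Mv rho u z = gm u * (z \<bullet> z) + gm u ^ 3 * (u \<bullet> z)^2
        + 3 * m_e rho * (PS cphi (u \<bullet> u) * (z \<bullet> z) + 2 * PS (diffs cphi) (u \<bullet> u) * (u \<bullet> z)^2)"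
    by (simp add: Mv_def inner_add_right inner_commute power2_eq_square algebra_simps)
  also have "\<dots> \<ge> gm u * (z \<bullet> z)"
    using g me p0 p1 by (intro add_increasing2 mult_nonneg_nonneg add_nonneg_nonneg) auto
  also have "gm u * (z \<bullet> z) \<ge> z \<bullet> z" using mult_right_mono[OF g, of "z \<bullet> z"] by simp
  finally show ?thesis .
qed

lemma Mv_diff: "Mv rho u a - Mv rho u b = Mv rho u (a - b)"
  by (simp add: Mv_def inner_diff_right scaleR_diff_right scaleR_diff_left algebra_simps)

lemma mv_diff_right: "(A::real^3^3) *v (a - b) = A *v a - A *v b"
  by (simp add: vec_eq_iff matrix_vector_mult_def sum_subtractf algebra_simps)

lemma onorm_mv_le: "onorm ((*v) (A::real^3^3)) \<le> 9 * norm A"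
proof -
  have "onorm ((*v) A) \<le> (\<Sum>i\<in>UNIV. \<Sum>j\<in>UNIV. \<bar>A $ i $ j\<bar>)" by (rule onorm_le_matrix_component_sum)
  also have "\<dots> \<le> (\<Sum>i\<in>(UNIV::3 set). \<Sum>j\<in>(UNIV::3 set). norm A)"
    by (intro sum_mono order_trans[OF component_le_norm_cart Finite_Cartesian_Product.norm_nth_le])
  also have "\<dots> = 9 * norm A" by simp
  finally show ?thesis .
qed

lemma gradV_BL:
  fixes gradV :: "real^3 \<Rightarrow> real^3" and hessV :: "real^3 \<Rightarrow> real^3^3"
  assumes d: "\<And>x. (gradV has_derivative (\<lambda>k. hessV x *v k)) (at x)"
    and b: "\<And>x. norm (gradV x) \<le> B" "\<And>x. norm (hessV x) \<le> B"
  shows "BL UNIV gradV"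
proof (rule BLI)
  have B0: "B \<ge> 0" using b(2)[of 0] norm_ge_zero order_trans by blast
  show "(9 * B)-lipschitz_on UNIV gradV"
  proof (rule bounded_derivative_imp_lipschitz)
    show "\<And>x. x \<in> UNIV \<Longrightarrow> (gradV has_derivative (\<lambda>k. hessV x *v k)) (at x within UNIV)" using d by simp
    show "\<And>x. x \<in> UNIV \<Longrightarrow> onorm (\<lambda>k. hessV x *v k) \<le> 9 * B"
    proof -
      fix x
      show "onorm (\<lambda>k. hessV x *v k) \<le> 9 * B" using onorm_mv_le[of "hessV x"] b(2)[of x] by linarith
    qed
  qed (use B0 in auto)
  show "\<And>x. x \<in> UNIV \<Longrightarrow> norm (gradV x) \<le> B" using b(1) by simp
qed

lemma Rm_bound:
  fixes k w W c s' p dz nn zn :: real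
  assumes k: "k \<ge> 0" and w: "1 \<le> w" "w \<le> W" and s': "\<bar>s'\<bar> \<le> 2*c" and p: "\<bar>p\<bar> \<le> zn"
    and dz: "\<bar>dz\<bar> \<le> c * zn" and nn: "nn = zn^2" and zn: "zn \<ge> 0" and c: "c \<ge> 0" and pn: "p^2 \<le> nn"
  shows "\<bar>k*(2*w*(w^2* s')*nn + 12*w^2*(w^2* s')*p^2 + 8*w^3*p*dz)\<bar> \<le> k*(4*W^3*c + 24*W^4*c + 8*W^3*c)*nn"
proof -
  have w0: "0 \<le> w" using w by simp
  have w3: "w^3 \<le> W^3" "w^4 \<le> W^4" using w by (auto intro: power_mono)
  have nn0: "nn \<ge> 0" using nn by simp
  have t1: "\<bar>2*w*(w^2* s')*nn\<bar> \<le> 4*W^3*c*nn"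
  proof -
    have "\<bar>2*w*(w^2* s')*nn\<bar> = 2*w^3*\<bar>s'\<bar>*nn" using w0 nn0 by (simp add: abs_mult power3_eq_cube power2_eq_square)
    also have "\<dots> \<le> 2*W^3*(2*c)*nn" using w3 s' nn0 w0 w by (intro mult_right_mono mult_mono mult_left_mono) auto
    finally show ?thesis by simp
  qed
  have t2: "\<bar>12*w^2*(w^2* s')*p^2\<bar> \<le> 24*W^4*c*nn"
  proof -
    have "\<bar>12*w^2*(w^2* s')*p^2\<bar> = 12*w^4*\<bar>s'\<bar>*p^2" using w0 by (simp add: abs_mult power4_eq_xxxx power2_eq_square)
    also have "\<dots> \<le> 12*W^4*(2*c)*nn" using w3 s' nn0 w0 pn c by (intro mult_mono mult_left_mono) auto
    finally show ?thesis by simp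
  qed
  have t3: "\<bar>8*w^3*p*dz\<bar> \<le> 8*W^3*c*nn"
  proof -
    have e: "\<bar>8*w^3*p*dz\<bar> = 8*w^3*(\<bar>p\<bar>*\<bar>dz\<bar>)" using w0 by (simp add: abs_mult)
    have a: "\<bar>p\<bar>*\<bar>dz\<bar> \<le> zn * (c * zn)" using p dz zn by (intro mult_mono) auto
    have b: "8*w^3*(\<bar>p\<bar>*\<bar>dz\<bar>) \<le> 8*w^3*(zn * (c * zn))" using a w0 by (intro mult_left_mono) auto
    have d: "8*w^3*(zn * (c * zn)) \<le> 8*W^3*(zn * (c * zn))" using w3 zn c by (intro mult_right_mono) auto
    have "8*W^3*(zn * (c * zn)) = 8*W^3*c*nn" using nn by (simp add: power2_eq_square algebra_simps)
    then show ?thesis using e b d by linarith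
  qed
  have "\<bar>2*w*(w^2* s')*nn + 12*w^2*(w^2* s')*p^2 + 8*w^3*p*dz\<bar> \<le> 4*W^3*c*nn + 24*W^4*c*nn + 8*W^3*c*nn"
    using t1 t2 t3 by linarith
  then have "k * \<bar>2*w*(w^2* s')*nn + 12*w^2*(w^2* s')*p^2 + 8*w^3*p*dz\<bar> \<le> k * (4*W^3*c*nn + 24*W^4*c*nn + 8*W^3*c*nn)"
    using k by (intro mult_left_mono) auto
  moreover have "\<bar>k*(2*w*(w^2* s')*nn + 12*w^2*(w^2* s')*p^2 + 8*w^3*p*dz)\<bar> = k * \<bar>2*w*(w^2* s')*nn + 12*w^2*(w^2* s')*p^2 + 8*w^3*p*dz\<bar>"
    using k by (simp add: abs_mult)
  moreover have "k * (4*W^3*c*nn + 24*W^4*c*nn + 8*W^3*c*nn) = k*(4*W^3*c + 24*W^4*c + 8*W^3*c)*nn"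
    by (simp add: algebra_simps)
  ultimately show ?thesis by linarith
qed


lemma kA_nonneg: "kA rho \<ge> 0" by (simp add: kA_def)

lemma amat_bound:
  assumes u: "norm u \<le> ubar" and ub: "0 \<le> ubar" "ubar < 1"
  shows "norm (amat rho u *v v) \<le> kA rho * ((1/(1-ubar^2))^2 + 4 * (1/(1-ubar^2))^3) * norm v"
proof -
  define W where "W = 1/(1-ubar^2)"
  define w where "w = 1/(1 - u \<bullet> u)"
  have u1: "norm u < 1" using u ub by simp
  have ub2: "ubar^2 < 1" using ub by (simp add: power_less_one_iff abs_less_iff)
  have s: "u \<bullet> u \<le> ubar^2" using power_mono[OF u norm_ge_zero, of 2] by (simp add: norm_sq_inner)
  have s1: "u \<bullet> u < 1" using s ub2 by linarith
  have w0: "0 \<le> w" using s1 by (simp add: w_def)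
  have wW: "w \<le> W" unfolding w_def W_def using s s1 ub2 by (intro divide_left_mono) auto
  have g: "(gam u)^4 = w^2" "(gam u)^6 = w^3" using gam_pow46[OF u1] by (simp_all add: w_def power_divide)
  have uv: "\<bar>u \<bullet> v\<bar> * norm u \<le> norm v"
  proof -
    have "\<bar>u \<bullet> v\<bar> * norm u \<le> (norm u * norm v) * norm u" by (intro mult_right_mono Cauchy_Schwarz_ineq2) auto
    also have "\<dots> = norm v * (norm u * norm u)" by simp
    also have "\<dots> \<le> norm v * 1" using u1 by (intro mult_left_mono) (auto intro: mult_le_one)
    finally show ?thesis by simp
  qed
  have "norm (amat rho u *v v) = kA rho * norm (w^2 *\<^sub>R v + (4 * w^3 * (u \<bullet> v)) *\<^sub>R u)"
    using kA_nonneg[of rho] by (simp add: amat_mv g)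
  also have "norm (w^2 *\<^sub>R v + (4 * w^3 * (u \<bullet> v)) *\<^sub>R u) \<le> w^2 * norm v + 4 * w^3 * (\<bar>u \<bullet> v\<bar> * norm u)"
    using w0 norm_triangle_ineq[of "w^2 *\<^sub>R v" "(4 * w^3 * (u \<bullet> v)) *\<^sub>R u"] by (simp add: abs_mult)
  also have "\<dots> \<le> W^2 * norm v + 4 * W^3 * norm v"
    using wW w0 uv by (intro add_mono mult_mono mult_left_mono power_mono) auto
  finally have "norm (amat rho u *v v) \<le> kA rho * (W^2 * norm v + 4 * W^3 * norm v)"
    using kA_nonneg[of rho] by (simp add: mult_left_mono)
  then show ?thesis by (simp add: W_def algebra_simps)
qed

lemma mv_add_right: "(A::real^3^3) *v (a + b) = A *v a + A *v b"
  by (simp add: vec_eq_iff matrix_vector_mult_def sum.distrib algebra_simps)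

lemma core:
  fixes r u du ddu :: "real \<Rightarrow> real^3" and h :: "((real^3) \<times> (real^3)) \<Rightarrow> real^3"
    and Dh :: "((real^3) \<times> (real^3)) \<Rightarrow> ((real^3) \<times> (real^3)) \<Rightarrow>\<^sub>L (real^3)"
    and gradV :: "real^3 \<Rightarrow> real^3"
  assumes eps: "eps > 0" and ch: "charge rho \<noteq> 0" and ub: "0 \<le> ubar" "ubar < 1"
    and sol: "\<And>t. (r has_vector_derivative u t) (at t) \<and> (u has_vector_derivative du t) (at t) \<and>
        (du has_vector_derivative ddu t) (at t) \<and>
        Mv rho (u t) (du t) = - gradV (r t) + eps *\<^sub>R (amat rho (u t) *v ddu t) + eps *\<^sub>R bvec rho (u t) (du t)"
    and bnd: "\<And>t. norm (u t) \<le> ubar \<and> norm (du t) \<le> cb"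
    and hb: "\<And>x. norm (h x) \<le> Bh \<and> norm (Dh x) \<le> Bh"
    and hd: "\<And>x. (h has_derivative blinfun_apply (Dh x)) (at x)"
    and inveq: "\<And>r0 u0. norm u0 \<le> ubar \<Longrightarrow> Mv rho u0 (h (r0,u0)) + gradV r0 - eps *\<^sub>R bvec rho u0 (h (r0,u0))
          = eps *\<^sub>R (amat rho u0 *v Dh (r0,u0) (u0, h (r0,u0)))"
    and bdiff: "\<And>v a b. norm v \<le> ubar \<Longrightarrow> norm a \<le> cb + Bh \<Longrightarrow> norm b \<le> cb + Bh \<Longrightarrow>
          norm (bvec rho v a - bvec rho v b) \<le> KB * norm (a - b)"
    and KB: "KB \<ge> 0" and cb: "cb \<ge> 0" and Bh: "Bh \<ge> 0"
    and small: "eps * (2 * KB + 2 * (kA rho * ((1/(1-ubar^2))^2 + 4 * (1/(1-ubar^2))^3)) * Bh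
                 + kA rho * (4 * (1/(1-ubar^2))^3 * cb + 24 * (1/(1-ubar^2))^4 * cb + 8 * (1/(1-ubar^2))^3 * cb) + 1) \<le> 1"
  shows "du t0 = h (r t0, u t0)"
proof -
  define W where "W = 1/(1-ubar^2)"
  define k where "k = kA rho"
  define KA where "KA = k * (W^2 + 4 * W^3)"
  define KR where "KR = k * (4 * W^3 * cb + 24 * W^4 * cb + 8 * W^3 * cb)"
  define Q where "Q = k * (W^2 + 4 * W^3)"
  have k: "k > 0" using kA_pos[OF ch] by (simp add: k_def)
  have ub2: "ubar^2 < 1" using ub by (simp add: power_less_one_iff abs_less_iff)
  have W1: "W \<ge> 1" using ub2 ub by (simp add: W_def)
  have Q: "Q > 0" using k W1 by (simp add: Q_def add_pos_nonneg)
  have small': "eps * (2 * KB + 2 * KA * Bh + KR + 1) \<le> 1"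
    using small by (simp add: KA_def KR_def k_def W_def)
  define hh where "hh t = h (r t, u t)" for t
  define z where "z t = du t - hh t" for t
  define D where "D t = Dh (r t, u t)" for t
  define Dz where "Dz t = ddu t - D t (u t, du t)" for t
  define s where "s t = u t \<bullet> u t" for t
  define w where "w t = 1 / (1 - s t)" for t
  define n where "n t = z t \<bullet> z t" for t
  define p where "p t = u t \<bullet> z t" for t
  define q where "q t = k * ((w t)^2 * n t + 4 * (w t)^3 * (p t)^2)" for t
  have ut: "norm (u t) \<le> ubar" "norm (u t) < 1" "norm (du t) \<le> cb" for t using bnd[of t] ub by auto
  have st: "0 \<le> s t" "s t \<le> ubar^2" "s t < 1" for t
  proof -
    show "0 \<le> s t" by (simp add: s_def)
    have "(norm (u t))^2 \<le> ubar^2" using ut(1)[of t] by (intro power_mono) auto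
    then show "s t \<le> ubar^2" by (simp add: s_def norm_sq_inner)
    then show "s t < 1" using ub2 by linarith
  qed
  have wt: "1 \<le> w t" "w t \<le> W" for t
  proof -
    show "1 \<le> w t" using st[of t] by (simp add: w_def)
    show "w t \<le> W" unfolding w_def W_def using st[of t] ub2 by (intro divide_left_mono) auto
  qed
  have g46: "(gam (u t))^4 = (w t)^2" "(gam (u t))^6 = (w t)^3" for t
    using gam_pow46[OF ut(2)[of t]] by (simp_all add: w_def s_def power_divide)
  have hhb: "norm (hh t) \<le> Bh" for t using hb by (simp add: hh_def)
  have zb: "norm (z t) \<le> cb + Bh" for t
    using norm_triangle_ineq4[of "du t" "hh t"] ut(3)[of t] hhb[of t] by (simp add: z_def)
  have dr: "(r has_vector_derivative u t) (at t)" and du: "(u has_vector_derivative du t) (at t)"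
    and ddu: "(du has_vector_derivative ddu t) (at t)" for t using sol by auto
  have dhh: "(hh has_vector_derivative D t (u t, du t)) (at t)" for t
  proof -
    have pr: "((\<lambda>t. (r t, u t)) has_vector_derivative (u t, du t)) (at t)"
      by (intro has_vector_derivative_Pair dr du)
    have "(hh has_derivative (\<lambda>x. blinfun_apply (D t) (x *\<^sub>R (u t, du t)))) (at t)"
      unfolding hh_def D_def using has_derivative_compose[OF pr[unfolded has_vector_derivative_def] hd] .
    then show ?thesis unfolding has_vector_derivative_def by (simp only: blinfun.scaleR_right)
  qed
  have dz: "(z has_vector_derivative Dz t) (at t)" for t
    unfolding z_def[abs_def] Dz_def by (intro has_vector_derivative_diff ddu dhh)
  have ds: "(s has_real_derivative (du t \<bullet> u t + u t \<bullet> du t)) (at t)" for t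
    unfolding s_def[abs_def] by (intro hvd_inner du)
  have dn: "(n has_real_derivative (Dz t \<bullet> z t + z t \<bullet> Dz t)) (at t)" for t
    unfolding n_def[abs_def] by (intro hvd_inner dz)
  have dp: "(p has_real_derivative (du t \<bullet> z t + u t \<bullet> Dz t)) (at t)" for t
    unfolding p_def[abs_def] by (intro hvd_inner dz du)
  have dw: "(w has_real_derivative (w t)^2 * (du t \<bullet> u t + u t \<bullet> du t)) (at t)" for t
  proof -
    have ne: "1 - s t \<noteq> 0" using st(3)[of t] by simp
    have "((\<lambda>t. 1 / (1 - s t)) has_real_derivative (du t \<bullet> u t + u t \<bullet> du t) / (1 - s t)^2) (at t)"
      by (rule derivative_eq_intros ds refl | use ne in \<open>simp add: power2_eq_square\<close>)+
    then show ?thesis by (simp add: w_def[abs_def] power_divide)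
  qed
  have key: "z t \<bullet> (amat rho (u t) *v Dz t) = (1/eps) * (z t \<bullet> Mv rho (u t) (z t))
      - z t \<bullet> (bvec rho (u t) (du t) - bvec rho (u t) (hh t)) - z t \<bullet> (amat rho (u t) *v D t (0, z t))" for t
  proof -
    let ?A = "amat rho (u t)"
    have e: "(u t, du t) = (u t, hh t) + (0, z t)" by (simp add: z_def)
    have lin: "D t (u t, du t) = D t (u t, hh t) + D t (0, z t)"
      unfolding arg_cong[OF e, of "blinfun_apply (D t)"] by (rule blinfun.add_right)
    have s1: "eps *\<^sub>R (?A *v ddu t) = Mv rho (u t) (du t) + gradV (r t) - eps *\<^sub>R bvec rho (u t) (du t)"
      using sol[of t] by (simp add: algebra_simps)
    have s2: "eps *\<^sub>R (?A *v D t (u t, hh t)) = Mv rho (u t) (hh t) + gradV (r t) - eps *\<^sub>R bvec rho (u t) (hh t)"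
      using inveq[OF ut(1)[of t], of "r t"] by (simp add: hh_def D_def)
    have "eps *\<^sub>R (?A *v Dz t) = eps *\<^sub>R (?A *v ddu t) - eps *\<^sub>R (?A *v D t (u t, hh t)) - eps *\<^sub>R (?A *v D t (0, z t))"
      unfolding Dz_def lin by (simp add: mv_diff_right mv_add_right algebra_simps)
    also have "\<dots> = (Mv rho (u t) (du t) - Mv rho (u t) (hh t)) - eps *\<^sub>R (bvec rho (u t) (du t) - bvec rho (u t) (hh t)) - eps *\<^sub>R (?A *v D t (0, z t))"
      unfolding s1 s2 by (simp add: algebra_simps)
    also have "Mv rho (u t) (du t) - Mv rho (u t) (hh t) = Mv rho (u t) (z t)" by (simp add: Mv_diff z_def)
    finally have E: "eps *\<^sub>R (?A *v Dz t) = Mv rho (u t) (z t) - eps *\<^sub>R (bvec rho (u t) (du t) - bvec rho (u t) (hh t)) - eps *\<^sub>R (?A *v D t (0, z t))" .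
    have "?A *v Dz t = (1/eps) *\<^sub>R (eps *\<^sub>R (?A *v Dz t))" using eps by simp
    also have "\<dots> = (1/eps) *\<^sub>R (Mv rho (u t) (z t) - eps *\<^sub>R (bvec rho (u t) (du t) - bvec rho (u t) (hh t)) - eps *\<^sub>R (?A *v D t (0, z t)))"
      by (simp only: E)
    finally have "?A *v Dz t = (1/eps) *\<^sub>R (Mv rho (u t) (z t) - eps *\<^sub>R (bvec rho (u t) (du t) - bvec rho (u t) (hh t)) - eps *\<^sub>R (?A *v D t (0, z t)))" .
    then have "z t \<bullet> (?A *v Dz t) = (1/eps) * (z t \<bullet> Mv rho (u t) (z t) - eps * (z t \<bullet> (bvec rho (u t) (du t) - bvec rho (u t) (hh t))) - eps * (z t \<bullet> (?A *v D t (0, z t))))"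
      by (simp only: inner_scaleR_right inner_diff_right)
    also have "\<dots> = (1/eps) * (z t \<bullet> Mv rho (u t) (z t)) - z t \<bullet> (bvec rho (u t) (du t) - bvec rho (u t) (hh t)) - z t \<bullet> (?A *v D t (0, z t))"
      using eps by (simp add: right_diff_distrib)
    finally show ?thesis .
  qed
  define sd where "sd t = du t \<bullet> u t + u t \<bullet> du t" for t
  define q' where "q' t = k * (2 * w t * ((w t)^2 * sd t) * n t + (w t)^2 * (Dz t \<bullet> z t + z t \<bullet> Dz t)
      + 4 * (3 * (w t)^2 * ((w t)^2 * sd t) * (p t)^2 + (w t)^3 * (2 * p t * (du t \<bullet> z t + u t \<bullet> Dz t))))" for t
  have dq: "(q has_real_derivative q' t) (at t)" for t
    unfolding q_def[abs_def] q'_def using dw[of t, folded sd_def] dn[of t] dp[of t]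
    by (auto intro!: derivative_eq_intros simp: algebra_simps)
  have Aform: "z t \<bullet> (amat rho (u t) *v Dz t) = k * ((w t)^2 * (z t \<bullet> Dz t) + 4 * (w t)^3 * (u t \<bullet> Dz t) * p t)" for t
    by (simp add: amat_mv g46 k_def inner_add_right p_def inner_commute algebra_simps)
  have qsplit: "q' t = 2 * (z t \<bullet> (amat rho (u t) *v Dz t)) +
      k*(2*w t*((w t)^2* sd t)*n t + 12*(w t)^2*((w t)^2* sd t)*(p t)^2 + 8*(w t)^3*p t*(du t \<bullet> z t))" for t
    unfolding Aform q'_def by (simp add: inner_commute algebra_simps)
  have zn: "n t = (norm (z t))^2" for t by (simp add: n_def power2_norm_eq_inner)
  have ule1: "norm (u t) \<le> 1" for t using ut(2)[of t] by simp
  have Rm: "\<bar>k*(2*w t*((w t)^2* sd t)*n t + 12*(w t)^2*((w t)^2* sd t)*(p t)^2 + 8*(w t)^3*p t*(du t \<bullet> z t))\<bar> \<le> KR * n t" for t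
    unfolding KR_def
  proof (rule Rm_bound[OF _ wt(1) wt(2) _ _ _ zn norm_ge_zero cb])
    show "0 \<le> k" using k by simp
    have "\<bar>u t \<bullet> du t\<bar> \<le> norm (u t) * norm (du t)" by (rule Cauchy_Schwarz_ineq2)
    also have "\<dots> \<le> 1 * cb" using ule1[of t] ut(3)[of t] by (intro mult_mono) auto
    finally show "\<bar>sd t\<bar> \<le> 2 * cb" by (simp add: sd_def inner_commute)
    have pz: "\<bar>p t\<bar> \<le> norm (z t)"
    proof -
      have "\<bar>p t\<bar> \<le> norm (u t) * norm (z t)" unfolding p_def by (rule Cauchy_Schwarz_ineq2)
      also have "\<dots> \<le> 1 * norm (z t)" using ule1[of t] by (intro mult_right_mono) auto
      finally show ?thesis by simp
    qed
    then show "\<bar>p t\<bar> \<le> norm (z t)" .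
    have "\<bar>du t \<bullet> z t\<bar> \<le> norm (du t) * norm (z t)" by (rule Cauchy_Schwarz_ineq2)
    also have "\<dots> \<le> cb * norm (z t)" using ut(3)[of t] by (intro mult_right_mono) auto
    finally show "\<bar>du t \<bullet> z t\<bar> \<le> cb * norm (z t)" .
    show "(p t)^2 \<le> n t" unfolding zn using pz by (metis abs_ge_zero power2_abs power_mono)
  qed
  have nn0: "n t \<ge> 0" for t by (simp add: n_def)
  have M1: "z t \<bullet> Mv rho (u t) (z t) \<ge> n t" for t unfolding n_def by (rule Mv_pos[OF ut(2)])
  have B1: "z t \<bullet> (bvec rho (u t) (du t) - bvec rho (u t) (hh t)) \<le> KB * n t" for t
  proof -
    have "z t \<bullet> (bvec rho (u t) (du t) - bvec rho (u t) (hh t)) \<le> norm (z t) * norm (bvec rho (u t) (du t) - bvec rho (u t) (hh t))"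
      by (rule order_trans[OF abs_ge_self Cauchy_Schwarz_ineq2])
    also have "\<dots> \<le> norm (z t) * (KB * norm (du t - hh t))"
      using ut(1,3)[of t] hhb[of t] Bh cb by (intro mult_left_mono bdiff) auto
    also have "\<dots> = KB * n t" by (simp add: zn z_def power2_eq_square)
    finally show ?thesis .
  qed
  have KA0: "KA \<ge> 0" using k W1 by (simp add: KA_def)
  have A1: "z t \<bullet> (amat rho (u t) *v D t (0, z t)) \<le> KA * Bh * n t" for t
  proof -
    have a1: "z t \<bullet> (amat rho (u t) *v D t (0, z t)) \<le> norm (z t) * norm (amat rho (u t) *v D t (0, z t))"
      by (rule order_trans[OF abs_ge_self Cauchy_Schwarz_ineq2])
    have a2: "norm (amat rho (u t) *v D t (0, z t)) \<le> KA * norm (D t (0, z t))"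
      unfolding KA_def k_def W_def using amat_bound[OF ut(1) ub] .
    have a3: "norm (D t (0, z t)) \<le> Bh * norm (z t)"
    proof -
      have b1: "norm (D t (0, z t)) \<le> norm (D t) * norm (0::real^3, z t)" by (rule norm_blinfun)
      have b2: "norm (0::real^3, z t) = norm (z t)" by (simp add: norm_Pair)
      have b3: "norm (D t) \<le> Bh" using hb by (simp add: D_def)
      have "norm (D t) * norm (z t) \<le> Bh * norm (z t)" using b3 by (rule mult_right_mono) simp
      then show ?thesis using b1 b2 by simp
    qed
    have "norm (amat rho (u t) *v D t (0, z t)) \<le> KA * (Bh * norm (z t))"
    proof -
      have "KA * norm (D t (0, z t)) \<le> KA * (Bh * norm (z t))" using a3 KA0 by (rule mult_left_mono)
      then show ?thesis using a2 by linarith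
    qed
    then have "norm (z t) * norm (amat rho (u t) *v D t (0, z t)) \<le> norm (z t) * (KA * (Bh * norm (z t)))"
      by (intro mult_left_mono) auto
    also have "\<dots> = KA * Bh * n t" by (simp add: zn power2_eq_square)
    finally show ?thesis using a1 by linarith
  qed
  have C: "2 * KB + 2 * KA * Bh + KR \<le> 1 / eps"
  proof -
    have "eps * (2 * KB + 2 * KA * Bh + KR) \<le> 1" using small' eps by (simp add: algebra_simps)
    then show ?thesis using eps by (simp add: field_simps mult.commute)
  qed
  have KR0: "KR \<ge> 0" using k W1 cb by (simp add: KR_def)
  have lower: "q' t \<ge> (1/eps) * n t" for t
  proof -
    have m: "(1/eps) * (z t \<bullet> Mv rho (u t) (z t)) \<ge> (1/eps) * n t" using M1[of t] eps by (intro mult_left_mono) auto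
    have r: "k*(2*w t*((w t)^2* sd t)*n t + 12*(w t)^2*((w t)^2* sd t)*(p t)^2 + 8*(w t)^3*p t*(du t \<bullet> z t)) \<ge> - (KR * n t)"
      using Rm[of t] by linarith
    have c: "(2 * KB + 2 * KA * Bh + KR) * n t \<le> (1 / eps) * n t" using C nn0[of t] by (rule mult_right_mono)
    have e: "(2 * KB + 2 * KA * Bh + KR) * n t = 2 * (KB * n t) + 2 * (KA * Bh * n t) + KR * n t" by (simp add: algebra_simps)
    have la: "\<And>(x::real) a R kr C b' c' b c. x \<le> a \<Longrightarrow> - kr \<le> R \<Longrightarrow> C \<le> x \<Longrightarrow> C = 2*b' + 2*c' + kr \<Longrightarrow> b \<le> b' \<Longrightarrow> c \<le> c' \<Longrightarrow> x \<le> 2*(a - b - c) + R"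
      by argo
    show ?thesis unfolding qsplit key by (rule la[OF m r c e B1[of t] A1[of t]])
  qed
  have qle: "q t \<le> Q * n t" for t
  proof -
    have p2: "(p t)^2 \<le> n t"
    proof -
      have "\<bar>p t\<bar> \<le> norm (u t) * norm (z t)" unfolding p_def by (rule Cauchy_Schwarz_ineq2)
      also have "\<dots> \<le> 1 * norm (z t)" using ule1[of t] by (intro mult_right_mono) auto
      finally have "\<bar>p t\<bar> \<le> norm (z t)" by simp
      then have "\<bar>p t\<bar>^2 \<le> (norm (z t))^2" by (rule power_mono) simp
      then show ?thesis unfolding zn by simp
    qed
    have w2: "(w t)^2 \<le> W^2" "(w t)^3 \<le> W^3" using wt[of t] by (auto intro: power_mono)
    have "(w t)^2 * n t + 4 * (w t)^3 * (p t)^2 \<le> W^2 * n t + 4 * W^3 * n t"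
      using w2 p2 nn0[of t] wt[of t] by (intro add_mono mult_mono mult_left_mono) auto
    then have "k * ((w t)^2 * n t + 4 * (w t)^3 * (p t)^2) \<le> k * (W^2 * n t + 4 * W^3 * n t)"
      using k by (intro mult_left_mono) auto
    then show ?thesis by (simp add: q_def Q_def algebra_simps)
  qed
  have qge: "q t \<ge> k * n t" for t
  proof -
    have "(w t)^2 \<ge> 1" using wt[of t] by (simp add: one_le_power)
    then have "1 * n t \<le> (w t)^2 * n t" using nn0[of t] by (rule mult_right_mono)
    then have "(w t)^2 * n t \<ge> n t" by simp
    moreover have "4 * (w t)^3 * (p t)^2 \<ge> 0" using wt[of t] by simp
    ultimately have "(w t)^2 * n t + 4 * (w t)^3 * (p t)^2 \<ge> n t" by linarith
    then show ?thesis unfolding q_def using k by (intro mult_left_mono) auto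
  qed
  define lam where "lam = 1 / (eps * Q)"
  have lam: "lam > 0" using eps Q by (simp add: lam_def)
  have grow: "q' t \<ge> lam * q t" for t
  proof -
    have "lam * q t \<le> lam * (Q * n t)" using qle[of t] lam by (intro mult_left_mono) auto
    also have "\<dots> = (1/eps) * n t" using Q eps by (simp add: lam_def)
    finally show ?thesis using lower[of t] by linarith
  qed
  have qbnd: "q t \<le> Q * (cb + Bh)^2" for t
  proof -
    have "n t \<le> (cb + Bh)^2" unfolding zn using zb[of t] by (intro power_mono) auto
    then have "Q * n t \<le> Q * (cb + Bh)^2" using Q by (intro mult_left_mono) auto
    then show ?thesis using qle[of t] by linarith
  qed
  have "q t0 \<le> 0" by (rule growth[OF dq grow lam qbnd])
  then have "k * n t0 \<le> 0" using qge[of t0] by linarith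
  then have "n t0 \<le> 0" using k by (simp add: mult_le_0_iff)
  then have "n t0 = 0" using nn0[of t0] by linarith
  then have "z t0 = 0" by (simp add: n_def)
  then show ?thesis by (simp add: z_def hh_def)
qed

theorem proposition4p6:
  fixes V :: "real^3 \<Rightarrow> real" and gradV :: "real^3 \<Rightarrow> real^3"
    and hessV :: "real^3 \<Rightarrow> real^3^3" and D3V :: "real^3 \<Rightarrow> real^3^3^3"
    and rho :: "real^3 \<Rightarrow> real"
    and ubar c2 eps2 :: real
    and r u du ddu :: "real \<Rightarrow> real \<Rightarrow> real^3"
    and amod mmod :: "real^3 \<Rightarrow> real^3^3" and bmod :: "real^3 \<Rightarrow> real^3 \<Rightarrow> real^3"
    and eps1 c :: real
    and h :: "real \<Rightarrow> ((real^3) \<times> (real^3)) \<Rightarrow> real^3"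
    and Dh :: "real \<Rightarrow> ((real^3) \<times> (real^3)) \<Rightarrow> ((real^3) \<times> (real^3)) \<Rightarrow>\<^sub>L (real^3)"
  assumes \<comment> \<open>(U): V in C^3 with bounded V and derivatives up to order 3\<close>
    V_deriv: "\<And>x. (V has_derivative (\<lambda>k. gradV x \<bullet> k)) (at x)"
    and gradV_deriv: "\<And>x. (gradV has_derivative (\<lambda>k. hessV x *v k)) (at x)"
    and hessV_deriv: "\<And>x. (hessV has_derivative
           (\<lambda>k. \<chi> i j. \<Sum>l\<in>UNIV. D3V x $ i $ j $ l * k $ l)) (at x)"
    and D3V_cont: "continuous_on UNIV D3V"
    and V_inf: "bdd_below (range V)"
    and V_bdd: "\<exists>B. \<forall>x. \<bar>V x\<bar> + norm (gradV x) + norm (hessV x) + norm (D3V x) \<le> B"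
    \<comment> \<open>the charge distribution rho\<close>
    and rho_smooth: "smooth_fun rho" and rho_supp: "compact_support rho"
    and rho_radial: "radial rho" and charge_nz: "charge rho \<noteq> 0"
    \<comment> \<open>the family of solutions\<close>
    and ubar: "ubar < 1" and c2: "c2 > 0" and eps2: "eps2 > 0"
    and sol: "\<And>eps t. 0 < eps \<Longrightarrow> eps \<le> eps2 \<Longrightarrow>
        (r eps has_vector_derivative u eps t) (at t) \<and>
        (u eps has_vector_derivative du eps t) (at t) \<and>
        (du eps has_vector_derivative ddu eps t) (at t) \<and>
        mmat rho (u eps t) *v du eps t =
          - gradV (r eps t) + eps *\<^sub>R (amat rho (u eps t) *v ddu eps t)
          + eps *\<^sub>R bvec rho (u eps t) (du eps t)"
    and sol_bounds: "\<And>eps t. 0 < eps \<Longrightarrow> eps \<le> eps2 \<Longrightarrow>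
        norm (u eps t) \<le> ubar \<and> norm (du eps t) + norm (ddu eps t) \<le> c2"
    \<comment> \<open>modified coefficients: unchanged near the ball of radius ubar,
        constant outside the ball of radius (1+ubar)/2\<close>
    and modif_agree: "\<exists>u1. ubar < u1 \<and> u1 \<le> (1 + ubar) / 2 \<and>
        (\<forall>v. norm v \<le> u1 \<longrightarrow> amod v = amat rho v \<and> mmod v = mmat rho v \<and>
                              (\<forall>w. bmod v w = bvec rho v w))"
    and modif_const: "\<And>v v'. norm v > (1 + ubar) / 2 \<Longrightarrow> norm v' > (1 + ubar) / 2 \<Longrightarrow>
        amod v = amod v' \<and> mmod v = mmod v' \<and> bmod v = bmod v'"
    \<comment> \<open>the center manifolds I_eps = graph of h eps, for 0 < eps <= eps1\<close>
    and eps1: "eps1 > 0" and c: "c > 0"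
    and h_C1: "\<And>eps x. 0 < eps \<Longrightarrow> eps \<le> eps1 \<Longrightarrow>
        (h eps has_derivative blinfun_apply (Dh eps x)) (at x)"
    and Dh_cont: "\<And>eps. 0 < eps \<Longrightarrow> eps \<le> eps1 \<Longrightarrow> continuous_on UNIV (Dh eps)"
    and h_bdd: "\<exists>B. \<forall>eps x. 0 < eps \<longrightarrow> eps \<le> eps1 \<longrightarrow>
        norm (h eps x) \<le> B \<and> norm (Dh eps x) \<le> B"
    and h_approx: "\<And>eps r0 u0. 0 < eps \<Longrightarrow> eps \<le> eps1 \<Longrightarrow>
        norm (h eps (r0, u0) + matrix_inv (mmod u0) *v gradV r0) \<le> c * eps"
    and h_inv: "\<And>eps. 0 < eps \<Longrightarrow> eps \<le> eps1 \<Longrightarrow> invariant_graph eps amod mmod bmod gradV (h eps)"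
  shows "\<exists>eps0>0. \<forall>eps. 0 < eps \<and> eps \<le> eps0 \<and> eps \<le> eps2 \<and> eps \<le> eps1 \<longrightarrow>
           (\<forall>t. du eps t = h eps (r eps t, u eps t))"
proof -
  obtain u1 where u1: "ubar < u1" "u1 \<le> (1 + ubar) / 2"
    and agree: "\<forall>v. norm v \<le> u1 \<longrightarrow> amod v = amat rho v \<and> mmod v = mmat rho v \<and> (\<forall>w. bmod v w = bvec rho v w)"
    using modif_agree by blast
  have u1lt: "u1 < 1" using u1 ubar by argo
  have ub0: "0 \<le> ubar" using sol_bounds[of eps2 0] eps2 norm_ge_zero[of "u eps2 0"] by linarith
  obtain BV where BV: "\<forall>x. \<bar>V x\<bar> + norm (gradV x) + norm (hessV x) + norm (D3V x) \<le> BV"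
    using V_bdd by blast
  have gB: "norm (gradV x) \<le> BV" "norm (hessV x) \<le> BV" for x
    using BV[rule_format, of x] abs_ge_zero[of "V x"] norm_ge_zero[of "gradV x"] norm_ge_zero[of "hessV x"] norm_ge_zero[of "D3V x"]
    by linarith+
  have gBL: "BL UNIV gradV" by (rule gradV_BL[OF gradV_deriv gB])
  obtain Bh where Bh: "\<forall>eps x. 0 < eps \<longrightarrow> eps \<le> eps1 \<longrightarrow> norm (h eps x) \<le> Bh \<and> norm (Dh eps x) \<le> Bh"
    using h_bdd by blast
  have Bh0: "Bh \<ge> 0" using Bh[rule_format, OF eps1 order_refl, of undefined] norm_ge_zero[of "h eps1 undefined"] by linarith
  define SB where "SB = {pq :: (real^3) \<times> (real^3). norm (fst pq) \<le> ubar \<and> norm (snd pq) \<le> c2 + Bh}"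
  have bSB: "bounded SB"
  proof -
    have "SB \<subseteq> cball 0 (ubar + (c2 + Bh))"
    proof
      fix pq assume "pq \<in> SB"
      then have a: "norm (fst pq) \<le> ubar" "norm (snd pq) \<le> c2 + Bh" by (auto simp: SB_def)
      have "norm pq \<le> norm (fst pq) + norm (snd pq)"
        using norm_Pair[of "fst pq" "snd pq"] sqrt_sum_squares_le_sum[of "norm (fst pq)" "norm (snd pq)"] by simp
      then show "pq \<in> cball 0 (ubar + (c2 + Bh))" using a by simp
    qed
    then show ?thesis using bounded_cball bounded_subset by blast
  qed
  have IdB: "BL SB (\<lambda>x. x)" by (rule BL_id[OF bSB])
  have "BL SB (\<lambda>pq. bvec rho (fst pq) (snd pq))"
    by (rule BL_bvec[OF BL_fst[OF IdB] BL_snd[OF IdB] _ ubar ub0]) (auto simp: SB_def)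
  then obtain KB where KB: "KB-lipschitz_on SB (\<lambda>pq. bvec rho (fst pq) (snd pq))" using BL_lip by blast
  have KB0: "KB \<ge> 0" using KB lipschitz_on_nonneg by blast
  have bdiff: "norm (bvec rho v a - bvec rho v b) \<le> KB * norm (a - b)"
    if "norm v \<le> ubar" "norm a \<le> c2 + Bh" "norm b \<le> c2 + Bh" for v a b
  proof -
    have "(v, a) \<in> SB" "(v, b) \<in> SB" using that by (auto simp: SB_def)
    from lipschitz_onD[OF KB this] have "dist (bvec rho v a) (bvec rho v b) \<le> KB * dist (v, a) (v, b)" by simp
    moreover have "dist (v, a) (v, b) = dist a b" by (simp add: dist_Pair_Pair)
    ultimately show ?thesis by (simp add: dist_norm)
  qed
  define C where "C = 2 * KB + 2 * (kA rho * ((1/(1-ubar^2))^2 + 4 * (1/(1-ubar^2))^3)) * Bh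
                 + kA rho * (4 * (1/(1-ubar^2))^3 * c2 + 24 * (1/(1-ubar^2))^4 * c2 + 8 * (1/(1-ubar^2))^3 * c2)"
  have ub2: "ubar^2 < 1" using ub0 ubar by (simp add: power_less_one_iff abs_less_iff)
  have C0: "C \<ge> 0" using KB0 Bh0 c2 ub2 kA_nonneg[of rho] by (simp add: C_def)
  show ?thesis
  proof (intro exI[of _ "1 / (C + 1)"] conjI allI impI)
    show "0 < 1 / (C + 1)" using C0 by simp
    fix eps t
    assume e: "0 < eps \<and> eps \<le> 1 / (C + 1) \<and> eps \<le> eps2 \<and> eps \<le> eps1"
    then have e0: "0 < eps" "eps \<le> eps2" "eps \<le> eps1" by auto
    have small: "eps * (C + 1) \<le> 1" using e C0 by (simp add: field_simps)
    show "du eps t = h eps (r eps t, u eps t)"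
    proof (rule core[where ubar=ubar and cb=c2 and Bh=Bh and KB=KB and gradV=gradV and rho=rho and eps=eps])
      show "eps > 0" by (rule e0(1))
      show "charge rho \<noteq> 0" by (rule charge_nz)
      show "0 \<le> ubar" "ubar < 1" by (rule ub0, rule ubar)
      fix t'
      have nb: "norm (u eps t') \<le> ubar" "norm (du eps t') + norm (ddu eps t') \<le> c2"
        using sol_bounds[OF e0(1,2)] by auto
      have n1: "norm (u eps t') < 1" using nb ubar by linarith
      show "(r eps has_vector_derivative u eps t') (at t') \<and> (u eps has_vector_derivative du eps t') (at t') \<and>
        (du eps has_vector_derivative ddu eps t') (at t') \<and>
        Mv rho (u eps t') (du eps t') = - gradV (r eps t') + eps *\<^sub>R (amat rho (u eps t') *v ddu eps t') + eps *\<^sub>R bvec rho (u eps t') (du eps t')"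
        using sol[OF e0(1,2), of t'] by (simp add: mmat_mv[OF n1])
      show "norm (u eps t') \<le> ubar \<and> norm (du eps t') \<le> c2" using nb norm_ge_zero[of "ddu eps t'"] by linarith
    next
      fix x show "norm (h eps x) \<le> Bh \<and> norm (Dh eps x) \<le> Bh" using Bh e0 by blast
    next
      fix x show "(h eps has_derivative blinfun_apply (Dh eps x)) (at x)" by (rule h_C1[OF e0(1,3)])
    next
      fix r0 u0 assume "norm (u0::real^3) \<le> ubar"
      then show "Mv rho u0 (h eps (r0,u0)) + gradV r0 - eps *\<^sub>R bvec rho u0 (h eps (r0,u0))
          = eps *\<^sub>R (amat rho u0 *v Dh eps (r0,u0) (u0, h eps (r0,u0)))"
        by (rule inv_equation[OF gBL charge_nz e0(1) ub0 u1(1) u1lt agree h_C1[OF e0(1,3)] h_inv[OF e0(1,3)]])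
    next
      fix v a b :: "real^3"
      assume "norm v \<le> ubar" "norm a \<le> c2 + Bh" "norm b \<le> c2 + Bh"
      then show "norm (bvec rho v a - bvec rho v b) \<le> KB * norm (a - b)" by (rule bdiff)
    next
      show "KB \<ge> 0" "c2 \<ge> 0" "Bh \<ge> 0" using KB0 c2 Bh0 by auto
      show "eps * (2 * KB + 2 * (kA rho * ((1/(1-ubar^2))^2 + 4 * (1/(1-ubar^2))^3)) * Bh
                 + kA rho * (4 * (1/(1-ubar^2))^3 * c2 + 24 * (1/(1-ubar^2))^4 * c2 + 8 * (1/(1-ubar^2))^3 * c2) + 1) \<le> 1"
        using small by (simp add: C_def)
    qed
  qed
qed

end
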